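(* Let $C$ be the cube in $\mathbb{R}^3$, with its $8$ vertices and $12$ edges, and let $G_C$ be its rotation group (isomorphic to $S_4$, of order $24$). The number of $G_C$-orbits of incomplete open cubes (as defined in the context) is exactly $122$.
   Context: Let $P$ be a convex polyhedron in $\mathbb{R}^3$ with vertex set $V$ and edge set $E$ (each edge a pair of vertices). For a subset $S\subseteq E$, let $V(S)$ be the set of vertices incident to at least one edge of $S$, and let $\Gamma(S)$ be the graph with vertex set $V(S)$ and edge set $S$. An incomplete open $P$ is a subset $S\subseteq E$ such that: (i) $S\neq\emptyset$ and $S\neq E$; (ii) $\Gamma(S)$ is connected; (iii) $S$ is non-planar, i.e. the points of $V(S)$ (as points of $\mathbb{R}^3$) are not all contained in a single affine plane. The rotation group of $P$ (orientation-preserving isometries of $\mathbb{R}^3$ mapping $P$ to itself) permutes $V$ and $E$, and hence acts on subsets of $E$; this action preserves the property of being an incomplete open $P$. Incomplete open $P$ are counted up to this action, i.e. one counts orbits; two mirror-image subsets not related by a rotation are counted separately. *)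

theory Defs
  imports "HOL-Analysis.Analysis"
begin

definition cube_V :: "(real^3) set" where
  "cube_V = {v. \<forall>i. v$i = 1 \<or> v$i = -1}"

definition cube_E :: "(real^3) set set" where
  "cube_E = {{u, v} | u v. u \<in> cube_V \<and> v \<in> cube_V \<and> dist u v = 2}"

definition cube_P :: "(real^3) set" where
  "cube_P = convex hull cube_V"

definition rot_group :: "(real^3 \<Rightarrow> real^3) set" where
  "rot_group = {f. (\<exists>A b. orthogonal_matrix (A :: real^3^3) \<and> det A = 1 \<and>
                        (\<forall>x. f x = A *v x + b)) \<and> f ` cube_P = cube_P}"

definition incident_vertices :: "(real^3) set set \<Rightarrow> (real^3) set" where
  "incident_vertices S = \<Union>S"

definition edge_graph_connected :: "(real^3) set set \<Rightarrow> bool" where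
  "edge_graph_connected S =
     (\<forall>u \<in> incident_vertices S. \<forall>v \<in> incident_vertices S.
        (u, v) \<in> {(x, y). {x, y} \<in> S}\<^sup>*)"

definition non_planar :: "(real^3) set set \<Rightarrow> bool" where
  "non_planar S = (\<not> (\<exists>a c. a \<noteq> 0 \<and> incident_vertices S \<subseteq> {x. a \<bullet> x = c}))"

definition incomplete_open_cube :: "(real^3) set set \<Rightarrow> bool" where
  "incomplete_open_cube S =
     (S \<subseteq> cube_E \<and> S \<noteq> {} \<and> S \<noteq> cube_E \<and> edge_graph_connected S \<and> non_planar S)"

definition edge_act :: "(real^3 \<Rightarrow> real^3) \<Rightarrow> (real^3) set set \<Rightarrow> (real^3) set set" where
  "edge_act f S = (\<lambda>e. f ` e) ` S"

definition rot_orbit :: "(real^3) set set \<Rightarrow> (real^3) set set set" where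
  "rot_orbit S = {edge_act f S | f. f \<in> rot_group}"

end

theory Submission
  imports Defs
begin

definition vl :: "(real^3) list" where
 "vl = [vector[-1,-1,-1], vector[1,-1,-1], vector[-1,1,-1], vector[1,1,-1],
        vector[-1,-1,1], vector[1,-1,1], vector[-1,1,1], vector[1,1,1]]"

lemma less8: "(i::nat) < 8 \<longleftrightarrow> i = 0 \<or> i = 1 \<or> i = 2 \<or> i = 3 \<or> i = 4 \<or> i = 5 \<or> i = 6 \<or> i = 7"
  by auto
lemma less12: "(i::nat) < 12 \<longleftrightarrow> i = 0 \<or> i = 1 \<or> i = 2 \<or> i = 3 \<or> i = 4 \<or> i = 5 \<or> i = 6 \<or> i = 7 \<or> i = 8 \<or> i = 9 \<or> i = 10 \<or> i = 11"
  by presburger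

lemma vec3_eq: "(x::'a^3) = y \<longleftrightarrow> x$1 = y$1 \<and> x$2 = y$2 \<and> x$3 = y$3"
  by (simp add: vec_eq_iff forall_3)

lemma vl_coords: "i < 8 \<Longrightarrow> (vl!i)$1 = (if odd i then 1 else -1) \<and> (vl!i)$2 = (if odd (i div 2) then 1 else -1) \<and> (vl!i)$3 = (if odd (i div 4) then 1 else -1)"
  unfolding less8 by (auto simp: vl_def)

lemma vl_inj: "i < 8 \<Longrightarrow> j < 8 \<Longrightarrow> vl!i = vl!j \<longleftrightarrow> i = j"
  unfolding less8 by (auto simp: vl_def vec3_eq)

lemma cube_V_vl: "cube_V = set vl"
proof
  show "set vl \<subseteq> cube_V" by (auto simp: vl_def cube_V_def forall_3)
  show "cube_V \<subseteq> set vl"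
  proof
    fix v assume "v \<in> cube_V"
    then have h: "\<forall>i. v$i = 1 \<or> v$i = -1" by (simp add: cube_V_def)
    from h[rule_format, of 1] h[rule_format, of 2] h[rule_format, of 3]
    show "v \<in> set vl" by (auto simp: vl_def vec3_eq)
  qed
qed

definition el :: "(nat\<times>nat) list" where "el = [(0,1),(0,2),(0,4),(1,3),(1,5),(2,3),(2,6),(3,7),(4,5),(4,6),(5,7),(6,7)]"

definition edg :: "nat \<Rightarrow> (real^3) set" where "edg k = {vl!fst(el!k), vl!snd(el!k)}"

lemma dist3: "dist (x::real^3) y = sqrt ((x$1-y$1)^2 + (x$2-y$2)^2 + (x$3-y$3)^2)"
  by (simp add: dist_vec_def L2_set_def sum_3 dist_real_def)

lemma sqrt_eq2: "x \<ge> 0 \<Longrightarrow> sqrt x = 2 \<longleftrightarrow> x = 4"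
  by (metis real_sqrt_eq_iff real_sqrt_four)

lemma sqdiff: "((if P then 1 else -1 :: real) - (if Q then 1 else -1))^2 = (if P = Q then 0 else 4)"
  by auto

definition onediff :: "nat \<Rightarrow> nat \<Rightarrow> bool" where
 "onediff i j = ((if odd i = odd j then 0 else 1) + (if odd (i div 2) = odd (j div 2) then 0 else 1) + (if odd (i div 4) = odd (j div 4) then 0 else (1::nat)) = 1)"

lemma dist_vl_onediff: "i < 8 \<Longrightarrow> j < 8 \<Longrightarrow> dist (vl!i) (vl!j) = 2 \<longleftrightarrow> onediff i j"
  unfolding dist3 onediff_def
  apply (subst sqrt_eq2, simp)
  apply (simp only: vl_coords sqdiff)
  apply (simp split: if_splits)
  done

lemma onediff_el: "i < 8 \<Longrightarrow> j < 8 \<Longrightarrow> onediff i j \<longleftrightarrow> (i,j) \<in> set el \<or> (j,i) \<in> set el"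
  unfolding less8 by (elim disjE; simp add: onediff_def el_def)

lemma el_bounds: "k < 12 \<Longrightarrow> fst (el!k) < 8 \<and> snd (el!k) < 8 \<and> fst (el!k) \<noteq> snd (el!k)"
  unfolding less12 by (elim disjE; simp add: el_def)

lemma length_el: "length el = 12" by (simp add: el_def)
lemma length_vl: "length vl = 8" by (simp add: vl_def)

lemma cube_E_edg: "cube_E = edg ` {..<12}"
proof
  show "cube_E \<subseteq> edg ` {..<12}"
  proof
    fix e assume "e \<in> cube_E"
    then obtain u v where e: "e = {u,v}" and uv: "u \<in> set vl" "v \<in> set vl" "dist u v = 2"
      by (auto simp: cube_E_def cube_V_vl)
    then obtain i j where ij: "i < 8" "j < 8" "u = vl!i" "v = vl!j" by (metis in_set_conv_nth length_vl)
    with uv have "(i,j) \<in> set el \<or> (j,i) \<in> set el" using dist_vl_onediff onediff_el by auto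
    then obtain k where k: "k < 12" "el!k = (i,j) \<or> el!k = (j,i)" by (metis in_set_conv_nth length_el)
    then have "e = edg k" using e ij by (auto simp: edg_def)
    with k show "e \<in> edg ` {..<12}" by auto
  qed
  show "edg ` {..<12} \<subseteq> cube_E"
  proof
    fix e assume "e \<in> edg ` {..<12}"
    then obtain k where k: "k < 12" "e = edg k" by auto
    define i j where "i = fst (el!k)" and "j = snd (el!k)"
    have ij: "i < 8" "j < 8" using el_bounds[OF k(1)] by (auto simp: i_def j_def)
    have "(i,j) \<in> set el" using k(1) by (simp add: i_def j_def length_el)
    then have "dist (vl!i) (vl!j) = 2" using dist_vl_onediff onediff_el ij by auto
    moreover have "vl!i \<in> cube_V" "vl!j \<in> cube_V" using ij by (auto simp: cube_V_vl length_vl)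
    ultimately show "e \<in> cube_E" unfolding cube_E_def k(2) edg_def i_def[symmetric] j_def[symmetric] by blast
  qed
qed

lemma edg_inj: "k < 12 \<Longrightarrow> l < 12 \<Longrightarrow> edg k = edg l \<longleftrightarrow> k = l"
proof -
  assume k: "k < 12" and l: "l < 12"
  have *: "edg k = edg l \<longleftrightarrow> (fst (el!k) = fst (el!l) \<and> snd (el!k) = snd (el!l)) \<or> (fst (el!k) = snd (el!l) \<and> snd (el!k) = fst (el!l))"
    unfolding edg_def doubleton_eq_iff using el_bounds[OF k] el_bounds[OF l] vl_inj by auto
  show ?thesis unfolding * using k l unfolding less12 by (elim disjE; simp add: el_def)
qed

lemma less24: "(i::nat) < 24 \<longleftrightarrow> i = 0 \<or> i = 1 \<or> i = 2 \<or> i = 3 \<or> i = 4 \<or> i = 5 \<or> i = 6 \<or> i = 7 \<or> i = 8 \<or> i = 9 \<or> i = 10 \<or> i = 11 \<or> i = 12 \<or> i = 13 \<or> i = 14 \<or> i = 15 \<or> i = 16 \<or> i = 17 \<or> i = 18 \<or> i = 19 \<or> i = 20 \<or> i = 21 \<or> i = 22 \<or> i = 23"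
  by presburger

definition Ml :: "(real^3^3) list" where "Ml = [vector[vector[1,0,0],vector[0,1,0],vector[0,0,1]],
  vector[vector[1,0,0],vector[0,-1,0],vector[0,0,-1]],
  vector[vector[-1,0,0],vector[0,1,0],vector[0,0,-1]],
  vector[vector[-1,0,0],vector[0,-1,0],vector[0,0,1]],
  vector[vector[1,0,0],vector[0,0,1],vector[0,-1,0]],
  vector[vector[1,0,0],vector[0,0,-1],vector[0,1,0]],
  vector[vector[-1,0,0],vector[0,0,1],vector[0,1,0]],
  vector[vector[-1,0,0],vector[0,0,-1],vector[0,-1,0]],
  vector[vector[0,1,0],vector[1,0,0],vector[0,0,-1]],
  vector[vector[0,1,0],vector[-1,0,0],vector[0,0,1]],
  vector[vector[0,-1,0],vector[1,0,0],vector[0,0,1]],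
  vector[vector[0,-1,0],vector[-1,0,0],vector[0,0,-1]],
  vector[vector[0,1,0],vector[0,0,1],vector[1,0,0]],
  vector[vector[0,1,0],vector[0,0,-1],vector[-1,0,0]],
  vector[vector[0,-1,0],vector[0,0,1],vector[-1,0,0]],
  vector[vector[0,-1,0],vector[0,0,-1],vector[1,0,0]],
  vector[vector[0,0,1],vector[1,0,0],vector[0,1,0]],
  vector[vector[0,0,1],vector[-1,0,0],vector[0,-1,0]],
  vector[vector[0,0,-1],vector[1,0,0],vector[0,-1,0]],
  vector[vector[0,0,-1],vector[-1,0,0],vector[0,1,0]],
  vector[vector[0,0,1],vector[0,1,0],vector[-1,0,0]],
  vector[vector[0,0,1],vector[0,-1,0],vector[1,0,0]],
  vector[vector[0,0,-1],vector[0,1,0],vector[1,0,0]],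
  vector[vector[0,0,-1],vector[0,-1,0],vector[-1,0,0]]]"

definition sl :: "nat list list" where "sl = [[0,1,2,3,4,5,6,7],[6,7,4,5,2,3,0,1],[5,4,7,6,1,0,3,2],[3,2,1,0,7,6,5,4],[4,5,0,1,6,7,2,3],[2,3,6,7,0,1,4,5],[1,0,5,4,3,2,7,6],[7,6,3,2,5,4,1,0],[4,6,5,7,0,2,1,3],[2,0,3,1,6,4,7,5],[1,3,0,2,5,7,4,6],[7,5,6,4,3,1,2,0],[0,4,1,5,2,6,3,7],[6,2,7,3,4,0,5,1],[5,1,4,0,7,3,6,2],[3,7,2,6,1,5,0,4],[0,2,4,6,1,3,5,7],[6,4,2,0,7,5,3,1],[5,7,1,3,4,6,0,2],[3,1,7,5,2,0,6,4],[4,0,6,2,5,1,7,3],[2,6,0,4,3,7,1,5],[1,5,3,7,0,4,2,6],[7,3,5,1,6,2,4,0]]"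

definition gl :: "nat list list" where "gl = [[0,1,2,3,4,5,6,7,8,9,10,11],[11,9,6,10,7,8,2,4,5,1,3,0],[8,10,4,9,2,11,7,6,0,3,1,5],[5,3,7,1,6,0,4,2,11,10,9,8],[8,2,9,4,10,0,1,3,11,6,7,5],[5,6,1,7,3,11,9,10,0,2,4,8],[0,4,3,2,1,8,10,9,5,7,6,11],[11,7,10,6,9,5,3,1,8,4,2,0],[9,8,2,11,6,10,4,7,1,0,5,3],[1,5,6,0,2,3,7,4,9,11,8,10],[3,0,4,5,7,1,2,6,10,8,11,9],[10,11,7,8,4,9,6,2,3,5,0,1],[2,0,1,8,9,4,3,10,6,5,11,7],[6,11,9,5,1,7,10,3,2,8,0,4],[4,8,10,0,3,2,9,1,7,11,5,6],[7,5,3,11,10,6,1,9,4,0,8,2],[1,2,0,6,5,9,8,11,3,4,7,10],[9,6,11,2,8,1,5,0,10,7,4,3],[10,4,8,7,11,3,0,5,9,2,6,1],[3,7,5,4,0,10,11,8,1,6,2,9],[2,9,8,1,0,6,11,5,4,10,3,7],[6,1,5,9,11,2,0,8,7,3,10,4],[4,3,0,10,8,7,5,11,2,1,9,6],[7,10,11,3,5,4,8,0,6,9,1,2]]"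

definition ginv :: "nat list list" where "ginv = [[0,1,2,3,4,5,6,7,8,9,10,11],[11,9,6,10,7,8,2,4,5,1,3,0],[8,10,4,9,2,11,7,6,0,3,1,5],[5,3,7,1,6,0,4,2,11,10,9,8],[5,6,1,7,3,11,9,10,0,2,4,8],[8,2,9,4,10,0,1,3,11,6,7,5],[0,4,3,2,1,8,10,9,5,7,6,11],[11,7,10,6,9,5,3,1,8,4,2,0],[9,8,2,11,6,10,4,7,1,0,5,3],[3,0,4,5,7,1,2,6,10,8,11,9],[1,5,6,0,2,3,7,4,9,11,8,10],[10,11,7,8,4,9,6,2,3,5,0,1],[1,2,0,6,5,9,8,11,3,4,7,10],[10,4,8,7,11,3,0,5,9,2,6,1],[3,7,5,4,0,10,11,8,1,6,2,9],[9,6,11,2,8,1,5,0,10,7,4,3],[2,0,1,8,9,4,3,10,6,5,11,7],[7,5,3,11,10,6,1,9,4,0,8,2],[6,11,9,5,1,7,10,3,2,8,0,4],[4,8,10,0,3,2,9,1,7,11,5,6],[4,3,0,10,8,7,5,11,2,1,9,6],[6,1,5,9,11,2,0,8,7,3,10,4],[2,9,8,1,0,6,11,5,4,10,3,7],[7,10,11,3,5,4,8,0,6,9,1,2]]"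

lemma mv3: "(A::real^3^3) *v x = vector[A$1$1*x$1 + A$1$2*x$2 + A$1$3*x$3, A$2$1*x$1 + A$2$2*x$2 + A$2$3*x$3, A$3$1*x$1 + A$3$2*x$2 + A$3$3*x$3]"
  by (simp add: vec3_eq matrix_vector_mult_def sum_3)

lemma mm3: "(A::real^3^3) ** (B::real^3^3) = vector[
   vector[A$1$1*B$1$1 + A$1$2*B$2$1 + A$1$3*B$3$1, A$1$1*B$1$2 + A$1$2*B$2$2 + A$1$3*B$3$2, A$1$1*B$1$3 + A$1$2*B$2$3 + A$1$3*B$3$3],
   vector[A$2$1*B$1$1 + A$2$2*B$2$1 + A$2$3*B$3$1, A$2$1*B$1$2 + A$2$2*B$2$2 + A$2$3*B$3$2, A$2$1*B$1$3 + A$2$2*B$2$3 + A$2$3*B$3$3],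
   vector[A$3$1*B$1$1 + A$3$2*B$2$1 + A$3$3*B$3$1, A$3$1*B$1$2 + A$3$2*B$2$2 + A$3$3*B$3$2, A$3$1*B$1$3 + A$3$2*B$2$3 + A$3$3*B$3$3]]"
  by (simp add: vec3_eq matrix_matrix_mult_def sum_3)

lemma tr3: "transpose (A::real^3^3) = vector[vector[A$1$1, A$2$1, A$3$1], vector[A$1$2, A$2$2, A$3$2], vector[A$1$3, A$2$3, A$3$3]]"
  by (simp add: vec3_eq transpose_def)

lemma mat1_3: "(mat 1 :: real^3^3) = vector[vector[1,0,0],vector[0,1,0],vector[0,0,1]]"
  by (simp add: vec3_eq mat_def)



lemma Ml_orth: "p < 24 \<Longrightarrow> orthogonal_matrix (Ml!p) \<and> det (Ml!p) = 1"
  unfolding less24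
  by (elim disjE; simp only: Ml_def nth_Cons_0 nth_Cons_numeral; simp add: orthogonal_matrix_def mm3 tr3 mat1_3 det_3 vec3_eq)


lemma Ml_vl: "p < 24 \<Longrightarrow> i < 8 \<Longrightarrow> Ml!p *v vl!i = vl!(sl!p!i)"
  unfolding less24 less8
  by (elim disjE; simp only: Ml_def nth_Cons_0 nth_Cons_numeral; simp add: mv3 sl_def vl_def vec3_eq)


definition six :: "(real\<times>real\<times>real) set" where
  "six = {(1,0,0),(-1,0,0),(0,1,0),(0,-1,0),(0,0,1),(0,0,-1)}"

lemma row_six:
  fixes x y z :: real
  assumes h: "\<And>t1 t2 t3. t1 \<in> {1,-1} \<Longrightarrow> t2 \<in> {1,-1} \<Longrightarrow> t3 \<in> {1,-1} \<Longrightarrow> x * t1 + y * t2 + z * t3 = 1 \<or> x * t1 + y * t2 + z * t3 = -1"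
  shows "(x,y,z) \<in> six"
proof -
  have h1: "x+y+z = 1 \<or> x+y+z = -1" using h[of 1 1 1] by simp
  have h2: "x+y-z = 1 \<or> x+y-z = -1" using h[of 1 1 "-1"] by simp
  have h3: "x-y+z = 1 \<or> x-y+z = -1" using h[of 1 "-1" 1] by simp
  have h4: "-x+y+z = 1 \<or> -x+y+z = -1" using h[of "-1" 1 1] by simp
  have h5: "x-y-z = 1 \<or> x-y-z = -1" using h[of 1 "-1" "-1"] by simp
  have h6: "-x+y-z = 1 \<or> -x+y-z = -1" using h[of "-1" 1 "-1"] by simp
  have h7: "-x-y+z = 1 \<or> -x-y+z = -1" using h[of "-1" "-1" 1] by simp
  have x: "x = 1 \<or> x = 0 \<or> x = -1" using h1 h5 by smt
  have y: "y = 1 \<or> y = 0 \<or> y = -1" using h1 h6 by smt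
  have z: "z = 1 \<or> z = 0 \<or> z = -1" using h1 h7 by smt
  show ?thesis using x y z h1 h2 h3 h4 unfolding six_def by (elim disjE; simp)
qed


lemma mat_cases:
  fixes a11 a12 a13 a21 a22 a23 a31 a32 a33 :: real
  assumes "(a11,a12,a13) \<in> six" "(a21,a22,a23) \<in> six" "(a31,a32,a33) \<in> six"
    and "a11 * a22 * a33 + a12 * a23 * a31 + a13 * a21 * a32 - a11 * a23 * a32 - a12 * a21 * a33 - a13 * a22 * a31 = 1"
  shows "vector[vector[a11,a12,a13],vector[a21,a22,a23],vector[a31,a32,a33]] \<in> set Ml"
  using assms unfolding six_def
  apply (simp only: insert_iff empty_iff prod.inject)
  apply (elim disjE conjE; simp only: ; simp add: Ml_def vec3_eq)
  done

lemma length_Ml: "length Ml = 24" by (simp add: Ml_def)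

lemma cube_P_box: "x \<in> cube_P \<Longrightarrow> \<bar>x$i\<bar> \<le> 1"
proof -
  assume x: "x \<in> cube_P"
  let ?K = "{x::real^3. \<forall>i. \<bar>x$i\<bar> \<le> 1}"
  have cK: "convex ?K"
    unfolding convex_def
  proof (intro ballI allI impI, simp, intro allI)
    fix x y :: "real^3" and u v :: real and i
    assume "\<forall>i. \<bar>x$i\<bar> \<le> 1" "\<forall>i. \<bar>y$i\<bar> \<le> 1" "0 \<le> u" "0 \<le> v" "u + v = 1"
    then have a: "\<bar>x$i\<bar> \<le> 1" "\<bar>y$i\<bar> \<le> 1" by auto
    have "\<bar>u * x$i + v * y$i\<bar> \<le> u * \<bar>x$i\<bar> + v * \<bar>y$i\<bar>"
      using \<open>0 \<le> u\<close> \<open>0 \<le> v\<close> by (simp add: abs_triangle_ineq[THEN order_trans] abs_mult)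
    also have "\<dots> \<le> u * 1 + v * 1"
      using a \<open>0 \<le> u\<close> \<open>0 \<le> v\<close> by (intro add_mono mult_left_mono) auto
    finally show "\<bar>u * x$i + v * y$i\<bar> \<le> 1" using \<open>u + v = 1\<close> by simp
  qed
  have "cube_V \<subseteq> ?K"
  proof
    fix y assume y: "y \<in> cube_V"
    have "\<bar>y$i\<bar> \<le> 1" for i
    proof -
      from y have "y$i = 1 \<or> y$i = -1" by (simp add: cube_V_def)
      then show ?thesis by auto
    qed
    then show "y \<in> ?K" by simp
  qed
  then have "cube_P \<subseteq> ?K" unfolding cube_P_def using cK by (rule hull_minimal)
  with x show ?thesis by auto
qed

lemma inner3: "(x::real^3) \<bullet> y = x$1 * y$1 + x$2 * y$2 + x$3 * y$3"
  by (simp add: inner_vec_def sum_3)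

lemma vert_dot_le: assumes v: "v \<in> cube_V" and x: "x \<in> cube_P"
  shows "v \<bullet> x \<le> 3" and "v \<bullet> x = 3 \<Longrightarrow> x = v"
proof -
  have c: "\<And>i. (v$i = 1 \<or> v$i = -1) \<and> \<bar>x$i\<bar> \<le> 1" using v x cube_P_box by (auto simp: cube_V_def)
  have t: "v$i * x$i \<le> 1" for i using c[of i] by (cases "v$i = 1") (auto simp: abs_le_iff)
  show "v \<bullet> x \<le> 3" unfolding inner3 using t[of 1] t[of 2] t[of 3] by linarith
  assume "v \<bullet> x = 3"
  then have "v$1 * x$1 = 1" "v$2 * x$2 = 1" "v$3 * x$3 = 1" unfolding inner3 using t[of 1] t[of 2] t[of 3] by linarith+
  then show "x = v" unfolding vec3_eq using c[of 1] c[of 2] c[of 3] by auto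
qed

lemma vert_extreme: assumes v: "v \<in> cube_V" shows "v extreme_point_of cube_P"
  unfolding extreme_point_of_def
proof (intro conjI ballI)
  show vP: "v \<in> cube_P" unfolding cube_P_def using v by (rule hull_inc)
  fix a b assume a: "a \<in> cube_P" and b: "b \<in> cube_P"
  show "v \<notin> open_segment a b"
  proof
    assume "v \<in> open_segment a b"
    then obtain u where ab: "a \<noteq> b" and u: "0 < u" "u < 1" and vu: "v = (1 - u) *\<^sub>R a + u *\<^sub>R b"
      by (auto simp: in_segment)
    have vi: "v$i * v$i = 1" for i
    proof -
      from v have "v$i = 1 \<or> v$i = -1" by (simp add: cube_V_def)
      then show ?thesis by auto
    qed
    have vv: "v \<bullet> v = 3" unfolding inner3 vi by simp
    have "v \<bullet> v = (1 - u) * (v \<bullet> a) + u * (v \<bullet> b)"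
      by (subst (2) vu) (simp add: inner_add_right)
    then have sum0: "(1-u)*(3 - v \<bullet> a) + u*(3 - v \<bullet> b) = 0" using vv by (simp add: algebra_simps)
    have le: "v \<bullet> a \<le> 3" "v \<bullet> b \<le> 3" using vert_dot_le v a b by auto
    have e1: "(1-u)*(3 - v \<bullet> a) \<ge> 0" using u le by simp
    have e2: "u*(3 - v \<bullet> b) \<ge> 0" using u le by simp
    have z1: "(1-u)*(3 - v \<bullet> a) = 0" "u*(3 - v \<bullet> b) = 0" using sum0 e1 e2 by linarith+
    have "v \<bullet> a = 3 \<and> v \<bullet> b = 3" using z1 u by auto
    then have "a = v" "b = v" using vert_dot_le(2) v a b by auto
    with ab show False by simp
  qed
qed

lemma affine_extreme:
  fixes A :: "real^3^3"
  assumes inj: "inj f" and f: "\<And>x. f x = A *v x + c" and v: "v extreme_point_of P"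
  shows "f v extreme_point_of (f ` P)"
  unfolding extreme_point_of_def
proof (intro conjI ballI)
  show "f v \<in> f ` P" using v by (auto simp: extreme_point_of_def)
  fix a' b' assume "a' \<in> f ` P" "b' \<in> f ` P"
  then obtain a b where a: "a \<in> P" "a' = f a" and b: "b \<in> P" "b' = f b" by auto
  show "f v \<notin> open_segment a' b'"
  proof
    assume "f v \<in> open_segment a' b'"
    then obtain u where ab: "f a \<noteq> f b" and u: "0 < u" "u < 1" and vu: "f v = (1 - u) *\<^sub>R f a + u *\<^sub>R f b"
      using a b by (auto simp: in_segment)
    have "f ((1 - u) *\<^sub>R a + u *\<^sub>R b) = (1 - u) *\<^sub>R f a + u *\<^sub>R f b"
      unfolding f by (simp add: matrix_vector_right_distrib matrix_vector_mult_scaleR algebra_simps)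
    with vu have "v = (1 - u) *\<^sub>R a + u *\<^sub>R b" using inj by (metis injD)
    moreover have "a \<noteq> b" using ab by auto
    ultimately have "v \<in> open_segment a b" using u by (auto simp: in_segment)
    then show False using v a b by (auto simp: extreme_point_of_def)
  qed
qed

lemma sum_vl: "(\<Sum>i<8. vl!i) = 0"
  by (simp add: numeral_eq_Suc vl_def vec3_eq)

lemma set_vl_img: "set vl = (!) vl ` {..<8}"
  unfolding set_conv_nth length_vl by blast

lemma vl_inj_on: "inj_on ((!) vl) {..<8}"
  by (auto intro: inj_onI simp: vl_inj)

lemma rot_vertex:
  assumes fG: "f \<in> rot_group"
  shows "\<exists>p<24. \<forall>i<8. f (vl!i) = vl!(sl!p!i)"
proof -
  obtain A :: "real^3^3" and c where orth: "orthogonal_matrix A" and dA: "det A = 1"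
    and f: "\<And>x. f x = A *v x + c" and fP: "f ` cube_P = cube_P"
    using fG unfolding rot_group_def by blast
  have inj: "inj f"
  proof (rule injI)
    fix x y assume "f x = f y"
    then have "A *v x = A *v y" using f by simp
    then have "transpose A *v (A *v x) = transpose A *v (A *v y)" by simp
    then show "x = y" using orth unfolding orthogonal_matrix_def
      by (simp add: matrix_vector_mul_assoc)
  qed
  have fV: "f v \<in> cube_V" if "v \<in> cube_V" for v
  proof -
    have "f v extreme_point_of (f ` cube_P)"
      using affine_extreme[OF inj f vert_extreme[OF that]] .
    then have "f v extreme_point_of cube_P" using fP by simp
    then show ?thesis unfolding cube_P_def by (rule extreme_point_of_convex_hull)
  qed
  have fimg: "f ` set vl = set vl"
  proof (rule card_subset_eq)
    show "finite (set vl)" by simp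
    show "f ` set vl \<subseteq> set vl" using fV cube_V_vl by auto
    show "card (f ` set vl) = card (set vl)" using inj by (simp add: card_image inj_on_subset)
  qed
  have s0: "sum id (set vl) = 0"
    unfolding set_vl_img by (simp add: sum.reindex[OF vl_inj_on] sum_vl)
  have "sum id (f ` set vl) = sum f (set vl)"
    using inj by (simp add: sum.reindex inj_on_subset)
  also have "\<dots> = (\<Sum>i<8. f (vl!i))"
    unfolding set_vl_img by (simp add: sum.reindex[OF vl_inj_on])
  also have "\<dots> = (\<Sum>i<8. A *v vl!i) + (\<Sum>i::nat<8. c)"
    unfolding f by (simp add: sum.distrib)
  also have "(\<Sum>i<8. A *v vl!i) = A *v (\<Sum>i<8. vl!i)"
    by (simp add: real_vector.linear_sum[OF matrix_vector_mul_linear])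
  also have "(\<Sum>i::nat<8. c) = 8 *\<^sub>R c"
    by (simp only: sum_constant_scaleR card_lessThan) simp
  finally have "sum id (f ` set vl) = A *v (\<Sum>i<8. vl!i) + 8 *\<^sub>R c" .
  then have "8 *\<^sub>R c = 0" using fimg s0 sum_vl by simp
  then have c0: "c = 0" by simp
  have Av: "A *v v \<in> cube_V" if "v \<in> cube_V" for v using fV[OF that] f c0 by simp
  have row: "(A$i$1, A$i$2, A$i$3) \<in> six" for i
  proof (rule row_six)
    fix t1 t2 t3 :: real assume t: "t1 \<in> {1,-1}" "t2 \<in> {1,-1}" "t3 \<in> {1,-1}"
    have "vector[t1,t2,t3] \<in> cube_V" using t by (auto simp: cube_V_def forall_3)
    then have "(A *v vector[t1,t2,t3]) $ i = 1 \<or> (A *v vector[t1,t2,t3]) $ i = -1"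
      using Av by (auto simp: cube_V_def)
    moreover have "(A *v vector[t1,t2,t3]) $ i = A$i$1 * t1 + A$i$2 * t2 + A$i$3 * t3"
      by (simp add: matrix_vector_mult_def sum_3)
    ultimately show "A$i$1 * t1 + A$i$2 * t2 + A$i$3 * t3 = 1 \<or> A$i$1 * t1 + A$i$2 * t2 + A$i$3 * t3 = -1"
      by simp
  qed
  have Aexp: "A = vector[vector[A$1$1,A$1$2,A$1$3],vector[A$2$1,A$2$2,A$2$3],vector[A$3$1,A$3$2,A$3$3]]"
    by (simp add: vec3_eq)
  have "A \<in> set Ml"
    by (subst Aexp, rule mat_cases[OF row row row], use dA in \<open>simp add: det_3\<close>)
  then obtain p where p: "p < 24" "A = Ml!p" by (metis in_set_conv_nth length_Ml)
  show ?thesis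
    by (rule exI[of _ p]) (simp add: p f c0 Ml_vl)
qed

lemma E1_all: "list_all (\<lambda>(s,g). list_all (\<lambda>k. {s!fst(el!k), s!snd(el!k)} = {fst(el!(g!k)), snd(el!(g!k))}) [0..<12]) (zip sl gl)"
  by (simp add: sl_def el_def gl_def upt_rec doubleton_eq_iff)

lemma E2_all: "list_all (\<lambda>(g,h). list_all (\<lambda>k. g!k < 12 \<and> h!k < 12 \<and> h!(g!k) = k \<and> g!(h!k) = k) [0..<12] \<and> length g = 12 \<and> length h = 12) (zip gl ginv)"
  by (simp add: gl_def ginv_def upt_rec)

lemma S_all: "list_all (\<lambda>s. list_all (\<lambda>i. s!i < 8 \<and> i \<in> set s) [0..<8] \<and> length s = 8) sl"
  by (simp add: sl_def upt_rec)

lemma len_sl: "length sl = 24" by (simp add: sl_def)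
lemma len_gl: "length gl = 24" by (simp add: gl_def)
lemma len_ginv: "length ginv = 24" by (simp add: ginv_def)

lemma list_all_upt: "list_all P [0..<n] \<longleftrightarrow> (\<forall>k<n. P k)"
  by (auto simp: list_all_iff)

lemma E1: "p < 24 \<Longrightarrow> k < 12 \<Longrightarrow> {sl!p!fst(el!k), sl!p!snd(el!k)} = {fst(el!(gl!p!k)), snd(el!(gl!p!k))}"
  using E1_all unfolding list_all_length by (auto simp: len_sl len_gl list_all_upt)

lemma E2: "p < 24 \<Longrightarrow> k < 12 \<Longrightarrow> gl!p!k < 12 \<and> ginv!p!k < 12 \<and> ginv!p!(gl!p!k) = k \<and> gl!p!(ginv!p!k) = k"
  using E2_all unfolding list_all_length by (auto simp: len_ginv len_gl list_all_upt)

lemma S1: "p < 24 \<Longrightarrow> i < 8 \<Longrightarrow> sl!p!i < 8 \<and> i \<in> set (sl!p)" and S2: "p < 24 \<Longrightarrow> length (sl!p) = 8"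
  using S_all unfolding list_all_length by (auto simp: len_sl list_all_upt)

lemma set_slp: "p < 24 \<Longrightarrow> (!) (sl!p) ` {..<8} = {..<8}"
proof -
  assume p: "p < 24"
  have "(!) (sl!p) ` {..<8} = set (sl!p)" using S2[OF p] by (auto simp: set_conv_nth)
  also have "\<dots> = {..<8}" using S1[OF p] S2[OF p] by (auto simp: set_conv_nth)
  finally show ?thesis .
qed

definition realizes :: "(real^3 \<Rightarrow> real^3) \<Rightarrow> nat \<Rightarrow> bool" where
  "realizes f p = (\<forall>i<8. f (vl!i) = vl!(sl!p!i))"

lemma rot_realize: "f \<in> rot_group \<Longrightarrow> \<exists>p<24. realizes f p"
  using rot_vertex unfolding realizes_def by blast

lemma realize_rot: assumes p: "p < 24"
  shows "(\<lambda>x. Ml!p *v x) \<in> rot_group" and "realizes (\<lambda>x. Ml!p *v x) p"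
proof -
  show r: "realizes (\<lambda>x. Ml!p *v x) p" unfolding realizes_def using Ml_vl p by simp
  have "(\<lambda>x. Ml!p *v x) ` cube_V = cube_V"
  proof -
    have "(\<lambda>x. Ml!p *v x) ` cube_V = (\<lambda>i. Ml!p *v vl!i) ` {..<8}"
      unfolding cube_V_vl set_vl_img by (simp add: image_image)
    also have "\<dots> = (\<lambda>i. vl!(sl!p!i)) ` {..<8}" using Ml_vl p by simp
    also have "\<dots> = (!) vl ` ((!) (sl!p) ` {..<8})" by (simp add: image_image)
    also have "\<dots> = cube_V" unfolding set_slp[OF p] cube_V_vl set_vl_img ..
    finally show ?thesis .
  qed
  then have "(\<lambda>x. Ml!p *v x) ` cube_P = cube_P"
    unfolding cube_P_def by (simp add: convex_hull_linear_image)
  then show "(\<lambda>x. Ml!p *v x) \<in> rot_group"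
    unfolding rot_group_def using Ml_orth[OF p] by force
qed

lemma edge_img: assumes f: "realizes f p" and p: "p < 24" and k: "k < 12"
  shows "f ` edg k = edg (gl!p!k)"
proof -
  have b: "fst (el!k) < 8" "snd (el!k) < 8" using el_bounds[OF k] by auto
  have "f ` edg k = {vl!(sl!p!fst(el!k)), vl!(sl!p!snd(el!k))}"
    using f b unfolding realizes_def edg_def by simp
  also have "\<dots> = (!) vl ` {sl!p!fst(el!k), sl!p!snd(el!k)}" by simp
  also have "\<dots> = (!) vl ` {fst(el!(gl!p!k)), snd(el!(gl!p!k))}" using E1[OF p k] by simp
  also have "\<dots> = edg (gl!p!k)" by (simp add: edg_def)
  finally show ?thesis .
qed

definition enc :: "bool list \<Rightarrow> (real^3) set set" where
  "enc xs = edg ` {k. k < 12 \<and> xs!k}"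

definition act :: "nat \<Rightarrow> bool list \<Rightarrow> bool list" where
  "act p xs = map (\<lambda>j. xs ! (ginv!p!j)) [0..<12]"

definition orbL :: "bool list \<Rightarrow> bool list set" where
  "orbL xs = (\<lambda>p. act p xs) ` {..<24}"

lemma length_act[simp]: "length (act p xs) = 12" by (simp add: act_def)

lemma act_nth: "j < 12 \<Longrightarrow> act p xs ! j = xs ! (ginv!p!j)" by (simp add: act_def)

lemma edge_act_enc: assumes f: "realizes f p" and p: "p < 24"
  shows "edge_act f (enc xs) = enc (act p xs)"
proof -
  have "edge_act f (enc xs) = (\<lambda>k. f ` edg k) ` {k. k < 12 \<and> xs!k}"
    unfolding edge_act_def enc_def by (simp add: image_image)
  also have "\<dots> = (\<lambda>k. edg (gl!p!k)) ` {k. k < 12 \<and> xs!k}"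
    using edge_img[OF f p] by auto
  also have "\<dots> = edg ` ((!) (gl!p) ` {k. k < 12 \<and> xs!k})" by (simp add: image_image)
  also have "(!) (gl!p) ` {k. k < 12 \<and> xs!k} = {j. j < 12 \<and> act p xs ! j}"
  proof
    show "(!) (gl!p) ` {k. k < 12 \<and> xs!k} \<subseteq> {j. j < 12 \<and> act p xs ! j}"
    proof
      fix j assume "j \<in> (!) (gl!p) ` {k. k < 12 \<and> xs!k}"
      then obtain k where k: "k < 12" "xs!k" "j = gl!p!k" by auto
      have "j < 12" "ginv!p!j = k" using E2[OF p k(1)] k(3) by auto
      then show "j \<in> {j. j < 12 \<and> act p xs ! j}" using k(2) by (simp add: act_nth)
    qed
    show "{j. j < 12 \<and> act p xs ! j} \<subseteq> (!) (gl!p) ` {k. k < 12 \<and> xs!k}"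
    proof
      fix j assume "j \<in> {j. j < 12 \<and> act p xs ! j}"
      then have j: "j < 12" "xs ! (ginv!p!j)" by (auto simp: act_nth)
      then show "j \<in> (!) (gl!p) ` {k. k < 12 \<and> xs!k}"
        using E2[OF p j(1)] by (intro image_eqI[of _ _ "ginv!p!j"]) auto
    qed
  qed
  finally show ?thesis unfolding enc_def .
qed

lemma rot_orbit_enc: "rot_orbit (enc xs) = enc ` orbL xs"
proof
  show "rot_orbit (enc xs) \<subseteq> enc ` orbL xs"
  proof
    fix S assume "S \<in> rot_orbit (enc xs)"
    then obtain f where f: "f \<in> rot_group" "S = edge_act f (enc xs)" by (auto simp: rot_orbit_def)
    obtain p where p: "p < 24" "realizes f p" using rot_realize[OF f(1)] by blast
    show "S \<in> enc ` orbL xs" using f(2) edge_act_enc[OF p(2) p(1)] p(1) by (auto simp: orbL_def)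
  qed
  show "enc ` orbL xs \<subseteq> rot_orbit (enc xs)"
  proof
    fix S assume "S \<in> enc ` orbL xs"
    then obtain p where p: "p < 24" "S = enc (act p xs)" by (auto simp: orbL_def)
    then have "S = edge_act (\<lambda>x. Ml!p *v x) (enc xs)" using edge_act_enc[OF realize_rot(2)[OF p(1)] p(1)] by simp
    then show "S \<in> rot_orbit (enc xs)" using realize_rot(1)[OF p(1)] by (auto simp: rot_orbit_def)
  qed
qed

lemma rot_comp: assumes f: "f \<in> rot_group" and g: "g \<in> rot_group" shows "f \<circ> g \<in> rot_group"
proof -
  obtain A b where A: "orthogonal_matrix (A::real^3^3)" "det A = 1" "\<And>x. f x = A *v x + b" "f ` cube_P = cube_P"
    using f unfolding rot_group_def by blast
  obtain B c where B: "orthogonal_matrix (B::real^3^3)" "det B = 1" "\<And>x. g x = B *v x + c" "g ` cube_P = cube_P"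
    using g unfolding rot_group_def by blast
  have "\<forall>x. (f \<circ> g) x = (A ** B) *v x + (A *v c + b)"
    by (simp add: A(3) B(3) matrix_vector_right_distrib matrix_vector_mul_assoc)
  moreover have "orthogonal_matrix (A ** B)" using A(1) B(1) by (rule orthogonal_matrix_mul)
  moreover have "det (A ** B) = 1" using A(2) B(2) by (simp add: det_mul)
  moreover have "(f \<circ> g) ` cube_P = cube_P" using A(4) B(4) by (metis image_comp)
  ultimately show ?thesis unfolding rot_group_def by blast
qed

lemma rot_inv: assumes f: "f \<in> rot_group" shows "\<exists>h \<in> rot_group. \<forall>x. h (f x) = x"
proof -
  obtain A b where A: "orthogonal_matrix (A::real^3^3)" "det A = 1" "\<And>x. f x = A *v x + b" "f ` cube_P = cube_P"
    using f unfolding rot_group_def by blast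
  define h where "h x = transpose A *v x + (- (transpose A *v b))" for x
  have hf: "h (f x) = x" for x
    using A(1) unfolding h_def A(3) orthogonal_matrix_def
    by (simp add: matrix_vector_right_distrib matrix_vector_mul_assoc)
  have "h ` cube_P = h ` (f ` cube_P)" using A(4) by simp
  also have "\<dots> = cube_P" by (simp add: image_image hf)
  finally have "h ` cube_P = cube_P" .
  moreover have "orthogonal_matrix (transpose A)" using A(1) by (simp add: orthogonal_matrix_transpose)
  moreover have "det (transpose A) = 1" using A(2) by (simp add: det_transpose)
  ultimately have "h \<in> rot_group" unfolding rot_group_def h_def by blast
  with hf show ?thesis by blast
qed

lemma edge_act_comp: "edge_act (f \<circ> g) S = edge_act f (edge_act g S)"
  unfolding edge_act_def by (simp add: image_comp image_image)

lemma rot_id: "id \<in> rot_group"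
proof -
  have "\<forall>x. id x = mat 1 *v x + 0" by simp
  moreover have "orthogonal_matrix (mat 1 :: real^3^3)" by (simp add: orthogonal_matrix_id)
  ultimately show ?thesis unfolding rot_group_def by force
qed

lemma rot_orbit_act: assumes g: "g \<in> rot_group" shows "rot_orbit (edge_act g S) = rot_orbit S"
proof
  show "rot_orbit (edge_act g S) \<subseteq> rot_orbit S"
    using rot_comp[OF _ g] by (auto simp: rot_orbit_def edge_act_comp[symmetric])
  obtain h where h: "h \<in> rot_group" "\<forall>x. h (g x) = x" using rot_inv[OF g] by blast
  have hg: "edge_act h (edge_act g S) = S"
    unfolding edge_act_def by (simp add: image_image h(2))
  show "rot_orbit S \<subseteq> rot_orbit (edge_act g S)"
  proof
    fix T assume "T \<in> rot_orbit S"
    then obtain f where f: "f \<in> rot_group" "T = edge_act f S" by (auto simp: rot_orbit_def)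
    then have "T = edge_act (f \<circ> h) (edge_act g S)" by (simp add: edge_act_comp hg)
    then show "T \<in> rot_orbit (edge_act g S)" using rot_comp[OF f(1) h(1)] by (auto simp: rot_orbit_def)
  qed
qed

lemma enc_inj: "inj_on enc {xs. length xs = 12}"
proof (rule inj_onI)
  fix xs ys assume xs: "xs \<in> {xs. length xs = 12}" and ys: "ys \<in> {xs. length xs = 12}" and e: "enc xs = enc ys"
  have ie: "inj_on edg {..<12}" by (auto intro: inj_onI simp: edg_inj)
  have "{k. k < 12 \<and> xs!k} = {k. k < 12 \<and> ys!k}"
    using e inj_on_image_eq_iff[OF ie, of "{k. k < 12 \<and> xs!k}" "{k. k < 12 \<and> ys!k}"] unfolding enc_def by auto
  then have h: "\<forall>k<12. xs!k = ys!k" unfolding set_eq_iff mem_Collect_eq by blast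
  show "xs = ys" using xs ys h by (intro nth_equalityI) auto
qed

lemma orbL_L12: "orbL xs \<subseteq> {xs. length xs = 12}" by (auto simp: orbL_def)

lemma orbL_self: "length xs = 12 \<Longrightarrow> xs \<in> orbL xs"
proof -
  assume l: "length xs = 12"
  have "enc xs = edge_act id (enc xs)" by (simp add: edge_act_def)
  then have "enc xs \<in> rot_orbit (enc xs)" using rot_id by (auto simp: rot_orbit_def)
  then obtain ys where ys: "ys \<in> orbL xs" "enc xs = enc ys" unfolding rot_orbit_enc by auto
  have "ys \<in> {xs. length xs = 12}" using ys(1) orbL_L12 by blast
  then have "ys = xs" using inj_onD[OF enc_inj ys(2)[symmetric]] l by simp
  with ys show ?thesis by simp
qed

lemma orbL_act: assumes l: "length xs = 12" and y: "ys \<in> orbL xs" shows "orbL ys = orbL xs"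
proof -
  obtain p where p: "p < 24" "ys = act p xs" using y by (auto simp: orbL_def)
  have e: "enc ys = edge_act (\<lambda>x. Ml!p *v x) (enc xs)"
    using p edge_act_enc[OF realize_rot(2)[OF p(1)] p(1)] by simp
  have "enc ` orbL ys = rot_orbit (enc ys)" by (simp add: rot_orbit_enc)
  also have "\<dots> = rot_orbit (enc xs)" unfolding e by (rule rot_orbit_act[OF realize_rot(1)[OF p(1)]])
  also have "\<dots> = enc ` orbL xs" by (simp add: rot_orbit_enc)
  finally have "enc ` orbL ys = enc ` orbL xs" .
  then show ?thesis using inj_on_image_eq_iff[OF enc_inj orbL_L12[of ys] orbL_L12[of xs]] by simp
qed

fun leqb :: "bool list \<Rightarrow> bool list \<Rightarrow> bool" where
  "leqb [] ys = True" | "leqb (x#xs) [] = True" |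
  "leqb (x#xs) (y#ys) = (if x = y then leqb xs ys else y)"

fun rk :: "bool list \<Rightarrow> nat" where
  "rk [] = 0" | "rk (x#xs) = (if x then 2 ^ length xs else 0) + rk xs"

lemma rk_less: "rk xs < 2 ^ length xs"
  by (induction xs) auto

lemma leqb_rk: "length xs = length ys \<Longrightarrow> leqb xs ys \<longleftrightarrow> rk xs \<le> rk ys"
proof (induction xs arbitrary: ys)
  case Nil then show ?case by simp
next
  case (Cons x xs)
  then obtain y ys' where ys: "ys = y # ys'" "length xs = length ys'" by (cases ys) auto
  have a: "rk xs < 2 ^ length xs" "rk ys' < 2 ^ length xs" using rk_less ys(2) by (metis)+
  show ?case using Cons.IH[OF ys(2)] a ys by auto
qed

lemma rk_inj: "length xs = length ys \<Longrightarrow> rk xs = rk ys \<Longrightarrow> xs = ys"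
proof (induction xs arbitrary: ys)
  case Nil then show ?case by simp
next
  case (Cons x xs)
  then obtain y ys' where ys: "ys = y # ys'" "length xs = length ys'" by (cases ys) auto
  have a: "rk xs < 2 ^ length xs" "rk ys' < 2 ^ length xs" using rk_less ys(2) by (metis)+
  have "x = y" using Cons.prems a ys by (auto split: if_splits)
  then show ?case using Cons.IH[OF ys(2)] Cons.prems ys by auto
qed

definition actq :: "nat list \<Rightarrow> bool list \<Rightarrow> bool list" where
  "actq q xs = map (\<lambda>j. xs ! (q!j)) [0..<12]"

definition wv :: "bool list \<Rightarrow> bool list" where
  "wv T = map (\<lambda>v. list_ex (\<lambda>k. T!k \<and> (fst (el!k) = v \<or> snd (el!k) = v)) [0..<12]) [0..<8]"

definition step :: "bool list \<Rightarrow> bool list \<Rightarrow> bool list" where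
  "step T X = map (\<lambda>v. X!v \<or> list_ex (\<lambda>k. T!k \<and> ((fst (el!k) = v \<and> X!(snd (el!k))) \<or> (snd (el!k) = v \<and> X!(fst (el!k))))) [0..<12]) [0..<8]"

definition firstv :: "bool list \<Rightarrow> nat" where
  "firstv W = (case find (\<lambda>v. W!v) [0..<8] of Some v \<Rightarrow> v | None \<Rightarrow> 0)"

definition reach :: "bool list \<Rightarrow> bool list" where
  "reach T = (step T ^^ 8) (map (\<lambda>v. v = firstv (wv T)) [0..<8])"

definition connc :: "bool list \<Rightarrow> bool" where
  "connc T = list_all (\<lambda>v. wv T ! v \<longrightarrow> reach T ! v) [0..<8]"

definition nonco :: "nat list list" where "nonco = [[0,1,2,4],[0,1,2,5],[0,1,2,6],[0,1,2,7],[0,1,3,4],[0,1,3,5],[0,1,3,6],[0,1,3,7],[0,1,4,6],[0,1,4,7],[0,1,5,6],[0,1,5,7],[0,2,3,4],[0,2,3,5],[0,2,3,6],[0,2,3,7],[0,2,4,5],[0,2,4,7],[0,2,5,6],[0,2,6,7],[0,3,4,5],[0,3,4,6],[0,3,5,6],[0,3,5,7],[0,3,6,7],[0,4,5,6],[0,4,5,7],[0,4,6,7],[0,5,6,7],[1,2,3,4],[1,2,3,5],[1,2,3,6],[1,2,3,7],[1,2,4,5],[1,2,4,6],[1,2,4,7],[1,2,5,7],[1,2,6,7],[1,3,4,5],[1,3,4,7],[1,3,5,6],[1,3,6,7],[1,4,5,6],[1,4,5,7],[1,4,6,7],[1,5,6,7],[2,3,4,6],[2,3,4,7],[2,3,5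,6],[2,3,5,7],[2,4,5,6],[2,4,5,7],[2,4,6,7],[2,5,6,7],[3,4,5,6],[3,4,5,7],[3,4,6,7],[3,5,6,7]]"

definition noncoc :: "bool list \<Rightarrow> bool" where
  "noncoc W = list_ex (\<lambda>Q. list_all (\<lambda>i. W!i) Q) nonco"

definition good0 :: "bool list \<Rightarrow> bool" where
  "good0 T = (if list_ex id T \<and> \<not> list_all id T then (if connc T then noncoc (wv T) else False) else False)"

fun mins :: "bool list list \<Rightarrow> bool list \<Rightarrow> bool" where
  "mins [] T = True" | "mins (Y#Ys) T = (if leqb T Y then mins Ys T else False)"

definition minl :: "bool list \<Rightarrow> bool" where
  "minl T = mins (map (\<lambda>q. actq q T) ginv) T"

fun cntg :: "nat \<Rightarrow> bool list \<Rightarrow> nat" where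
  "cntg 0 pre = (if minl pre then (if good0 pre then 1 else 0) else 0)" |
  "cntg (Suc n) pre = cntg n (pre @ [False]) + cntg n (pre @ [True])"




lemma wv_sym: "wv [a0,a1,a2,a3,a4,a5,a6,a7,a8,a9,a10,a11] = [(a0 \<or> a1 \<or> a2),(a0 \<or> a3 \<or> a4),(a1 \<or> a5 \<or> a6),(a3 \<or> a5 \<or> a7),(a2 \<or> a8 \<or> a9),(a4 \<or> a8 \<or> a10),(a6 \<or> a9 \<or> a11),(a7 \<or> a10 \<or> a11)]"
  by (simp add: wv_def el_def upt_rec numeral_eq_Suc)

lemma step_sym: "step [a0,a1,a2,a3,a4,a5,a6,a7,a8,a9,a10,a11] [x0,x1,x2,x3,x4,x5,x6,x7] = [(x0 \<or> (a0 \<and> x1) \<or> (a1 \<and> x2) \<or> (a2 \<and> x4)),(x1 \<or> (a0 \<and> x0) \<or> (a3 \<and> x3) \<or> (a4 \<and> x5)),(x2 \<or> (a1 \<and> x0) \<or> (a5 \<and> x3) \<or> (a6 \<and> x6)),(x3 \<or> (a3 \<and> x1) \<or> (a5 \<and> x2) \<or> (a7 \<and> x7)),(x4 \<or> (a2 \<and> x0) \<or> (a8 \<and> x5) \<or> (a9 \<and> x6)),(x5 \<or> (a4 \<and> x1) \<or> (a8 \<and> x4) \<or> (a10 \<and> x7)),(x6 \<or> (a6 \<and> x2) \<or> (a9 \<and> x4) \<or> (a11 \<and> x7)),(x7 \<or> (a7 \<and> x3) \<or> (a10 \<and> x5) \<or> (a11 \<and> x6))]"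
  by (simp add: step_def el_def upt_rec numeral_eq_Suc)

lemma perms_sym: "map (\<lambda>q. actq q [a0,a1,a2,a3,a4,a5,a6,a7,a8,a9,a10,a11]) ginv = [[a0,a1,a2,a3,a4,a5,a6,a7,a8,a9,a10,a11],[a11,a9,a6,a10,a7,a8,a2,a4,a5,a1,a3,a0],[a8,a10,a4,a9,a2,a11,a7,a6,a0,a3,a1,a5],[a5,a3,a7,a1,a6,a0,a4,a2,a11,a10,a9,a8],[a5,a6,a1,a7,a3,a11,a9,a10,a0,a2,a4,a8],[a8,a2,a9,a4,a10,a0,a1,a3,a11,a6,a7,a5],[a0,a4,a3,a2,a1,a8,a10,a9,a5,a7,a6,a11],[a11,a7,a10,a6,a9,a5,a3,a1,a8,a4,a2,a0],[a9,a8,a2,a11,a6,a10,a4,a7,a1,a0,a5,a3],[a3,a0,a4,a5,a7,a1,a2,a6,a10,a8,a11,a9],[a1,a5,a6,a0,a2,a3,a7,a4,a9,a11,a8,a10],[a10,a11,a7,a8,a4,a9,a6,a2,a3,a5,a0,a1],[a1,a2,a0,a6,a5,a9,a8,a11,a3,a4,a7,a10],[a10,a4,a8,a7,a11,a3,a0,a5,a9,a2,a6,a1],[a3,a7,a5,a4,a0,a10,a11,a8,a1,a6,a2,a9],[a9,a6,a11,a2,a8,a1,a5,a0,a10,a7,a4,a3],[a2,a0,a1,a8,a9,a4,a3,a10,a6,a5,a11,a7],[a7,a5,a3,a11,a10,a6,a1,a9,a4,a0,a8,a2],[a6,a11,a9,a5,a1,a7,a10,a3,a2,a8,a0,a4]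,[a4,a8,a10,a0,a3,a2,a9,a1,a7,a11,a5,a6],[a4,a3,a0,a10,a8,a7,a5,a11,a2,a1,a9,a6],[a6,a1,a5,a9,a11,a2,a0,a8,a7,a3,a10,a4],[a2,a9,a8,a1,a0,a6,a11,a5,a4,a10,a3,a7],[a7,a10,a11,a3,a5,a4,a8,a0,a6,a9,a1,a2]]"
  by (simp add: actq_def ginv_def upt_rec numeral_eq_Suc)

lemma nonco_sym: "noncoc [w0,w1,w2,w3,w4,w5,w6,w7] = ((w0 \<and> w1 \<and> w2 \<and> w4) \<or> (w0 \<and> w1 \<and> w2 \<and> w5) \<or> (w0 \<and> w1 \<and> w2 \<and> w6) \<or> (w0 \<and> w1 \<and> w2 \<and> w7) \<or> (w0 \<and> w1 \<and> w3 \<and> w4) \<or> (w0 \<and> w1 \<and> w3 \<and> w5) \<or> (w0 \<and> w1 \<and> w3 \<and> w6) \<or> (w0 \<and> w1 \<and> w3 \<and> w7) \<or> (w0 \<and> w1 \<and> w4 \<and> w6) \<or> (w0 \<and> w1 \<and> w4 \<and> w7) \<or> (w0 \<and> w1 \<and> w5 \<and> w6) \<or> (w0 \<and> w1 \<and> w5 \<and> w7) \<or> (w0 \<and> w2 \<and> w3 \<and> w4) \<or> (w0 \<and> w2 \<and> w3 \<and> w5) \<or> (w0 \<and> w2 \<and> w3 \<and> w6) \<or> (w0 \<and> w2 \<and> w3 \<and> w7) \<or> (w0 \<and> w2 \<and> w4 \<and> w5) \<or> (w0 \<and> w2 \<and> w4 \<and> w7) \<or> (w0 \<and> w2 \<and>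 w5 \<and> w6) \<or> (w0 \<and> w2 \<and> w6 \<and> w7) \<or> (w0 \<and> w3 \<and> w4 \<and> w5) \<or> (w0 \<and> w3 \<and> w4 \<and> w6) \<or> (w0 \<and> w3 \<and> w5 \<and> w6) \<or> (w0 \<and> w3 \<and> w5 \<and> w7) \<or> (w0 \<and> w3 \<and> w6 \<and> w7) \<or> (w0 \<and> w4 \<and> w5 \<and> w6) \<or> (w0 \<and> w4 \<and> w5 \<and> w7) \<or> (w0 \<and> w4 \<and> w6 \<and> w7) \<or> (w0 \<and> w5 \<and> w6 \<and> w7) \<or> (w1 \<and> w2 \<and> w3 \<and> w4) \<or> (w1 \<and> w2 \<and> w3 \<and> w5) \<or> (w1 \<and> w2 \<and> w3 \<and> w6) \<or> (w1 \<and> w2 \<and> w3 \<and> w7) \<or> (w1 \<and> w2 \<and> w4 \<and> w5) \<or> (w1 \<and> w2 \<and> w4 \<and> w6) \<or> (w1 \<and> w2 \<and> w4 \<and> w7) \<or> (w1 \<and> w2 \<and> w5 \<and> w7) \<or> (w1 \<and> w2 \<and> w6 \<and> w7) \<or> (w1 \<and> w3 \<and> w4 \<and> w5) \<or> (w1 \<and> w3 \<and> w4 \<and> w7) \<or> (w1 \<and> w3 \<and> w5 \<and> w6) \<or> (w1 \<and> w3 \<and> w6 \<and> w7) \<or> (w1 \<and> w4 \<and> w5 \<and> w6) \<or> (w1 \<and> w4 \<and> w5 \<and> w7) \<or> (w1 \<and> w4 \<and> w6 \<and> w7) \<or> (w1 \<and> w5 \<and> w6 \<and> w7) \<or> (w2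 \<and> w3 \<and> w4 \<and> w6) \<or> (w2 \<and> w3 \<and> w4 \<and> w7) \<or> (w2 \<and> w3 \<and> w5 \<and> w6) \<or> (w2 \<and> w3 \<and> w5 \<and> w7) \<or> (w2 \<and> w4 \<and> w5 \<and> w6) \<or> (w2 \<and> w4 \<and> w5 \<and> w7) \<or> (w2 \<and> w4 \<and> w6 \<and> w7) \<or> (w2 \<and> w5 \<and> w6 \<and> w7) \<or> (w3 \<and> w4 \<and> w5 \<and> w6) \<or> (w3 \<and> w4 \<and> w5 \<and> w7) \<or> (w3 \<and> w4 \<and> w6 \<and> w7) \<or> (w3 \<and> w5 \<and> w6 \<and> w7))"
  by (simp add: noncoc_def nonco_def numeral_eq_Suc)

lemma minl_sym: "minl [a0,a1,a2,a3,a4,a5,a6,a7,a8,a9,a10,a11] = (if leqb [a0,a1,a2,a3,a4,a5,a6,a7,a8,a9,a10,a11] [a0,a1,a2,a3,a4,a5,a6,a7,a8,a9,a10,a11] then (if leqb [a0,a1,a2,a3,a4,a5,a6,a7,a8,a9,a10,a11] [a11,a9,a6,a10,a7,a8,a2,a4,a5,a1,a3,a0] then (if leqb [a0,a1,a2,a3,a4,a5,a6,a7,a8,a9,a10,a11] [a8,a10,a4,a9,a2,a11,a7,a6,a0,a3,a1,a5] then (if leqb [a0,a1,a2,a3,a4,a5,a6,a7,a8,a9,a10,a11] [a5,a3,a7,a1,a6,a0,a4,a2,a11,a10,a9,a8] then (if leqb [a0,a1,a2,a3,a4,a5,a6,a7,a8,a9,a10,a11] [a5,a6,a1,a7,a3,a11,a9,a10,a0,a2,a4,a8]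 then (if leqb [a0,a1,a2,a3,a4,a5,a6,a7,a8,a9,a10,a11] [a8,a2,a9,a4,a10,a0,a1,a3,a11,a6,a7,a5] then (if leqb [a0,a1,a2,a3,a4,a5,a6,a7,a8,a9,a10,a11] [a0,a4,a3,a2,a1,a8,a10,a9,a5,a7,a6,a11] then (if leqb [a0,a1,a2,a3,a4,a5,a6,a7,a8,a9,a10,a11] [a11,a7,a10,a6,a9,a5,a3,a1,a8,a4,a2,a0] then (if leqb [a0,a1,a2,a3,a4,a5,a6,a7,a8,a9,a10,a11] [a9,a8,a2,a11,a6,a10,a4,a7,a1,a0,a5,a3] then (if leqb [a0,a1,a2,a3,a4,a5,a6,a7,a8,a9,a10,a11] [a3,a0,a4,a5,a7,a1,a2,a6,a10,a8,a11,a9] then (if leqb [a0,a1,a2,a3,a4,a5,a6,a7,a8,a9,a10,a11] [a1,a5,a6,a0,a2,a3,a7,a4,a9,a11,a8,a10] then (if leqb [a0,a1,a2,a3,a4,a5,a6,a7,a8,a9,a10,a11] [a10,a11,a7,a8,a4,a9,a6,a2,a3,a5,a0,a1] then (if leqb [a0,a1,a2,a3,a4,a5,a6,a7,a8,a9,a10,a11] [a1,a2,a0,a6,a5,a9,a8,a11,a3,a4,a7,a10] then (if leqb [a0,a1,a2,a3,a4,a5,a6,a7,a8,a9,a10,a11] [a10,a4,a8,a7,a11,a3,a0,a5,a9,a2,a6,a1] then (if leqb [a0,a1,a2,a3,a4,a5,a6,a7,a8,a9,a10,a11] [a3,a7,a5,a4,a0,a10,a11,a8,a1,a6,a2,a9]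 then (if leqb [a0,a1,a2,a3,a4,a5,a6,a7,a8,a9,a10,a11] [a9,a6,a11,a2,a8,a1,a5,a0,a10,a7,a4,a3] then (if leqb [a0,a1,a2,a3,a4,a5,a6,a7,a8,a9,a10,a11] [a2,a0,a1,a8,a9,a4,a3,a10,a6,a5,a11,a7] then (if leqb [a0,a1,a2,a3,a4,a5,a6,a7,a8,a9,a10,a11] [a7,a5,a3,a11,a10,a6,a1,a9,a4,a0,a8,a2] then (if leqb [a0,a1,a2,a3,a4,a5,a6,a7,a8,a9,a10,a11] [a6,a11,a9,a5,a1,a7,a10,a3,a2,a8,a0,a4] then (if leqb [a0,a1,a2,a3,a4,a5,a6,a7,a8,a9,a10,a11] [a4,a8,a10,a0,a3,a2,a9,a1,a7,a11,a5,a6] then (if leqb [a0,a1,a2,a3,a4,a5,a6,a7,a8,a9,a10,a11] [a4,a3,a0,a10,a8,a7,a5,a11,a2,a1,a9,a6] then (if leqb [a0,a1,a2,a3,a4,a5,a6,a7,a8,a9,a10,a11] [a6,a1,a5,a9,a11,a2,a0,a8,a7,a3,a10,a4] then (if leqb [a0,a1,a2,a3,a4,a5,a6,a7,a8,a9,a10,a11] [a2,a9,a8,a1,a0,a6,a11,a5,a4,a10,a3,a7] then (if leqb [a0,a1,a2,a3,a4,a5,a6,a7,a8,a9,a10,a11] [a7,a10,a11,a3,a5,a4,a8,a0,a6,a9,a1,a2] then True else False) else False) else False) else False) else False) else False) else False) else False) else False) else False) else False) else False) else False) else False) else False) else False) else False) else False) else False) else False) else False) else False) else False) else False)"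
  by (simp only: minl_def perms_sym mins.simps)

definition rp :: "(nat list \<times> (real^3) \<times> real) list" where "rp = [([1,3,5,7],vector[1,0,0],1),([0,2,4,6],vector[1,0,0],-1),([2,3,6,7],vector[0,1,0],1),([0,1,4,5],vector[0,1,0],-1),([4,5,6,7],vector[0,0,1],1),([0,1,2,3],vector[0,0,1],-1),([0,3,4,7],vector[1,-1,0],0),([1,2,5,6],vector[1,1,0],0),([0,2,5,7],vector[1,0,-1],0),([1,3,4,6],vector[1,0,1],0),([0,1,6,7],vector[0,1,-1],0),([2,3,4,5],vector[0,1,1],0)]"

definition rectc :: "bool list \<Rightarrow> bool" where
  "rectc W = list_ex (\<lambda>(R,a,c). list_all (\<lambda>i. W!i \<longrightarrow> i \<in> set R) [0..<8]) rp"

lemma rect_sym: "rectc [w0,w1,w2,w3,w4,w5,w6,w7] = ((\<not> w0 \<and> \<not> w2 \<and> \<not> w4 \<and> \<not> w6) \<or> (\<not> w1 \<and> \<not> w3 \<and> \<not> w5 \<and> \<not> w7) \<or> (\<not> w0 \<and> \<not> w1 \<and> \<not> w4 \<and> \<not> w5) \<or> (\<not> w2 \<and> \<not> w3 \<and> \<not> w6 \<and> \<not> w7) \<or> (\<not> w0 \<and> \<not> w1 \<and> \<not> w2 \<and> \<not> w3) \<or> (\<not> w4 \<and> \<not> w5 \<and> \<not> w6 \<and> \<not> w7) \<or> (\<not> w1 \<and> \<not> w2 \<and> \<not> w5 \<and> \<not> w6) \<or> (\<not> w0 \<and> \<not> w3 \<and> \<not> w4 \<and> \<not> w7) \<or>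 (\<not> w1 \<and> \<not> w3 \<and> \<not> w4 \<and> \<not> w6) \<or> (\<not> w0 \<and> \<not> w2 \<and> \<not> w5 \<and> \<not> w7) \<or> (\<not> w2 \<and> \<not> w3 \<and> \<not> w4 \<and> \<not> w5) \<or> (\<not> w0 \<and> \<not> w1 \<and> \<not> w6 \<and> \<not> w7))"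
  by (simp add: rectc_def rp_def upt_rec)

definition chk :: "bool list \<Rightarrow> bool" where
  "chk W = (noncoc W \<or> rectc W \<or> length (filter id W) \<le> 3)"

fun allb :: "nat \<Rightarrow> bool list \<Rightarrow> bool" where
  "allb 0 pre = chk pre" |
  "allb (Suc n) pre = (allb n (pre @ [False]) \<and> allb n (pre @ [True]))"

lemma allb_iff: "allb n pre \<longleftrightarrow> (\<forall>xs. length xs = n \<longrightarrow> chk (pre @ xs))"
proof (induction n arbitrary: pre)
  case 0 then show ?case by simp
next
  case (Suc n)
  show ?case
  proof
    assume "allb (Suc n) pre"
    then have a: "\<forall>xs. length xs = n \<longrightarrow> chk ((pre @ [False]) @ xs)" "\<forall>xs. length xs = n \<longrightarrow> chk ((pre @ [True]) @ xs)"
      using Suc.IH by auto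
    show "\<forall>xs. length xs = Suc n \<longrightarrow> chk (pre @ xs)"
    proof (intro allI impI)
      fix xs :: "bool list" assume "length xs = Suc n"
      then obtain b ys where "xs = b # ys" "length ys = n" by (auto simp: length_Suc_conv)
      then show "chk (pre @ xs)" using a by (cases b) auto
    qed
  next
    assume a: "\<forall>xs. length xs = Suc n \<longrightarrow> chk (pre @ xs)"
    have "\<forall>xs. length xs = n \<longrightarrow> chk ((pre @ [b]) @ xs)" for b
      using a[rule_format, of "b # _"] by auto
    then show "allb (Suc n) pre" using Suc.IH by auto
  qed
qed

lemma allb8: "allb 8 []"
  by (simp add: chk_def nonco_sym rect_sym numeral_eq_Suc)

lemma rp_ok: "list_all (\<lambda>(R,a,c). a \<noteq> 0 \<and> list_all (\<lambda>i. a \<bullet> (vl!i) = c) R) rp"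
  by (simp add: rp_def vl_def inner3 vec3_eq)

lemma nonco_ok: "list_all (\<lambda>Q. list_all (\<lambda>i. i < 8) Q) nonco"
  by (simp add: nonco_def)

lemma nonco_lin: "Q \<in> set nonco \<Longrightarrow> (\<forall>i\<in>set Q. a \<bullet> (vl!i) = c) \<Longrightarrow> a = 0"
  unfolding nonco_def
  apply (simp only: set_simps insert_iff empty_iff)
  apply (elim disjE; simp add: vl_def inner3 vec3_eq; linarith)
  done


lemma list_ex_upt: "list_ex P [0..<n] \<longleftrightarrow> (\<exists>k<n. P k)"
  by (auto simp: list_ex_iff)

definition Wset :: "bool list \<Rightarrow> nat set" where
  "Wset xs = {v. v < 8 \<and> wv xs ! v}"

lemma length_wv[simp]: "length (wv xs) = 8" by (simp add: wv_def)

lemma wv_nth: "v < 8 \<Longrightarrow> wv xs ! v \<longleftrightarrow> (\<exists>k<12. xs!k \<and> (fst (el!k) = v \<or> snd (el!k) = v))"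
  by (simp add: wv_def list_ex_upt)

lemma iv_enc: "incident_vertices (enc xs) = (!) vl ` Wset xs"
proof
  show "incident_vertices (enc xs) \<subseteq> (!) vl ` Wset xs"
  proof
    fix x assume "x \<in> incident_vertices (enc xs)"
    then obtain k where k: "k < 12" "xs!k" "x \<in> edg k" by (auto simp: incident_vertices_def enc_def)
    then have "x = vl!fst (el!k) \<or> x = vl!snd (el!k)" by (auto simp: edg_def)
    moreover have "fst (el!k) \<in> Wset xs" "snd (el!k) \<in> Wset xs"
      using k el_bounds[OF k(1)] by (auto simp: Wset_def wv_nth)
    ultimately show "x \<in> (!) vl ` Wset xs" by auto
  qed
  show "(!) vl ` Wset xs \<subseteq> incident_vertices (enc xs)"
  proof
    fix x assume "x \<in> (!) vl ` Wset xs"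
    then obtain v where v: "v < 8" "wv xs ! v" "x = vl!v" by (auto simp: Wset_def)
    then obtain k where k: "k < 12" "xs!k" "fst (el!k) = v \<or> snd (el!k) = v" using wv_nth by auto
    then have "x \<in> edg k" using v by (auto simp: edg_def)
    then show "x \<in> incident_vertices (enc xs)" using k by (auto simp: incident_vertices_def enc_def)
  qed
qed

definition Rn :: "bool list \<Rightarrow> (nat \<times> nat) set" where
  "Rn xs = {(a,b). \<exists>k<12. xs!k \<and> ((a = fst (el!k) \<and> b = snd (el!k)) \<or> (a = snd (el!k) \<and> b = fst (el!k)))}"

lemma Rn_bound: "(a,b) \<in> Rn xs \<Longrightarrow> a < 8 \<and> b < 8"
  unfolding Rn_def using el_bounds by auto

lemma Rn_sym: "sym (Rn xs)"
  unfolding Rn_def sym_def by blast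

lemma Rr_enc: "{(x,y). {x,y} \<in> enc xs} = map_prod ((!) vl) ((!) vl) ` Rn xs"
proof
  show "{(x,y). {x,y} \<in> enc xs} \<subseteq> map_prod ((!) vl) ((!) vl) ` Rn xs"
  proof
    fix z assume "z \<in> {(x,y). {x,y} \<in> enc xs}"
    then obtain x y where z: "z = (x,y)" "{x,y} \<in> enc xs" by auto
    then obtain k where k: "k < 12" "xs!k" "{x,y} = edg k" by (auto simp: enc_def)
    then have "(x = vl!fst (el!k) \<and> y = vl!snd (el!k)) \<or> (x = vl!snd (el!k) \<and> y = vl!fst (el!k))"
      by (simp add: edg_def doubleton_eq_iff)
    then show "z \<in> map_prod ((!) vl) ((!) vl) ` Rn xs"
    proof
      assume h: "x = vl!fst (el!k) \<and> y = vl!snd (el!k)"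
      have "(fst (el!k), snd (el!k)) \<in> Rn xs" using k by (auto simp: Rn_def)
      then show ?thesis using h z by (auto intro: image_eqI[of _ _ "(fst (el!k), snd (el!k))"])
    next
      assume h: "x = vl!snd (el!k) \<and> y = vl!fst (el!k)"
      have "(snd (el!k), fst (el!k)) \<in> Rn xs" using k by (auto simp: Rn_def)
      then show ?thesis using h z by (auto intro: image_eqI[of _ _ "(snd (el!k), fst (el!k))"])
    qed
  qed
  show "map_prod ((!) vl) ((!) vl) ` Rn xs \<subseteq> {(x,y). {x,y} \<in> enc xs}"
  proof
    fix z assume "z \<in> map_prod ((!) vl) ((!) vl) ` Rn xs"
    then obtain a b where z: "z = (vl!a, vl!b)" "(a,b) \<in> Rn xs" by auto
    then obtain k where k: "k < 12" "xs!k" "(a = fst (el!k) \<and> b = snd (el!k)) \<or> (a = snd (el!k) \<and> b = fst (el!k))"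
      by (auto simp: Rn_def)
    then have "{vl!a, vl!b} = edg k" by (auto simp: edg_def)
    then show "z \<in> {(x,y). {x,y} \<in> enc xs}" using z k by (auto simp: enc_def)
  qed
qed

lemma rtrancl_map_inj:
  assumes inj: "inj_on g A" and R: "R \<subseteq> A \<times> A" and a: "a \<in> A" and b: "b \<in> A"
  shows "(g a, g b) \<in> (map_prod g g ` R)\<^sup>* \<longleftrightarrow> (a, b) \<in> R\<^sup>*"
proof
  assume "(a, b) \<in> R\<^sup>*"
  then show "(g a, g b) \<in> (map_prod g g ` R)\<^sup>*"
  proof (induction rule: rtrancl_induct)
    case base then show ?case by simp
  next
    case (step y z)
    then have "(g y, g z) \<in> map_prod g g ` R" by force
    with step(3) show ?case by (rule rtrancl_into_rtrancl)
  qed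
next
  assume h: "(g a, g b) \<in> (map_prod g g ` R)\<^sup>*"
  have "\<forall>a'\<in>A. x = g a' \<longrightarrow> (\<exists>b'\<in>A. y = g b' \<and> (a', b') \<in> R\<^sup>*)"
    if "(x, y) \<in> (map_prod g g ` R)\<^sup>*" for x y
    using that
  proof (induction rule: rtrancl_induct)
    case base then show ?case by blast
  next
    case (step y z)
    show ?case
    proof (intro ballI impI)
      fix a' assume a': "a' \<in> A" "x = g a'"
      then obtain b' where b': "b' \<in> A" "y = g b'" "(a', b') \<in> R\<^sup>*" using step(3) by blast
      obtain c d where cd: "(c, d) \<in> R" "y = g c" "z = g d" using step(2) by auto
      have "c \<in> A" "d \<in> A" using cd(1) R by auto
      then have "c = b'" using inj b' cd by (metis inj_onD)
      then have "(a', d) \<in> R\<^sup>*" using b'(3) cd(1) by (metis rtrancl.rtrancl_into_rtrancl)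
      then show "\<exists>b'\<in>A. z = g b' \<and> (a', b') \<in> R\<^sup>*" using cd(3) \<open>d \<in> A\<close> by blast
    qed
  qed
  from this[OF h] a obtain b' where "b' \<in> A" "g b = g b'" "(a, b') \<in> R\<^sup>*" by blast
  then show "(a, b) \<in> R\<^sup>*" using inj b by (metis inj_onD)
qed

lemma conn_enc: "edge_graph_connected (enc xs) \<longleftrightarrow> (\<forall>a\<in>Wset xs. \<forall>b\<in>Wset xs. (a, b) \<in> (Rn xs)\<^sup>*)"
proof -
  have W8: "Wset xs \<subseteq> {..<8}" by (auto simp: Wset_def)
  have R8: "Rn xs \<subseteq> {..<8} \<times> {..<8}" using Rn_bound by auto
  have inj: "inj_on ((!) vl) {..<8}" by (rule vl_inj_on)
  have "edge_graph_connected (enc xs) \<longleftrightarrow> (\<forall>a\<in>Wset xs. \<forall>b\<in>Wset xs. (vl!a, vl!b) \<in> (map_prod ((!) vl) ((!) vl) ` Rn xs)\<^sup>*)"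
    unfolding edge_graph_connected_def iv_enc Rr_enc by blast
  also have "\<dots> \<longleftrightarrow> (\<forall>a\<in>Wset xs. \<forall>b\<in>Wset xs. (a, b) \<in> (Rn xs)\<^sup>*)"
    using rtrancl_map_inj[OF inj R8] W8 by blast
  finally show ?thesis .
qed

definition Fn :: "bool list \<Rightarrow> nat set \<Rightarrow> nat set" where
  "Fn xs A = A \<union> Rn xs `` A"

lemma length_step[simp]: "length (step xs X) = 8" by (simp add: step_def)

lemma step_set: "length X = 8 \<Longrightarrow> {v. v < 8 \<and> step xs X ! v} = Fn xs {v. v < 8 \<and> X!v}"
proof -
  assume l: "length X = 8"
  have "v < 8 \<and> step xs X ! v \<longleftrightarrow> v \<in> Fn xs {v. v < 8 \<and> X!v}" for v
  proof
    assume v: "v < 8 \<and> step xs X ! v"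
    then have v8: "v < 8" and sv: "step xs X ! v" by auto
    from sv have "X!v \<or> (\<exists>k<12. xs!k \<and> ((fst (el!k) = v \<and> X!(snd (el!k))) \<or> (snd (el!k) = v \<and> X!(fst (el!k)))))"
      using v8 by (simp add: step_def list_ex_upt)
    then show "v \<in> Fn xs {v. v < 8 \<and> X!v}"
    proof
      assume "X!v" then show ?thesis using v by (simp add: Fn_def)
    next
      assume "\<exists>k<12. xs!k \<and> ((fst (el!k) = v \<and> X!(snd (el!k))) \<or> (snd (el!k) = v \<and> X!(fst (el!k))))"
      then obtain k where k: "k < 12" "xs!k" "(fst (el!k) = v \<and> X!(snd (el!k))) \<or> (snd (el!k) = v \<and> X!(fst (el!k)))" by blast
      show ?thesis
      proof (cases "fst (el!k) = v \<and> X!(snd (el!k))")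
        case True
        then have "(snd (el!k), v) \<in> Rn xs" using k by (auto simp: Rn_def)
        then show ?thesis using True el_bounds[OF k(1)] unfolding Fn_def by blast
      next
        case False
        then have h: "snd (el!k) = v \<and> X!(fst (el!k))" using k(3) by blast
        then have "(fst (el!k), v) \<in> Rn xs" using k by (auto simp: Rn_def)
        then show ?thesis using h el_bounds[OF k(1)] unfolding Fn_def by blast
      qed
    qed
  next
    assume v: "v \<in> Fn xs {v. v < 8 \<and> X!v}"
    then consider "v < 8 \<and> X!v" | w where "w < 8" "X!w" "(w, v) \<in> Rn xs" unfolding Fn_def by blast
    then show "v < 8 \<and> step xs X ! v"
    proof cases
      case 1 then show ?thesis by (simp add: step_def)
    next
      case 2
      then obtain k where k: "k < 12" "xs!k" "(w = fst (el!k) \<and> v = snd (el!k)) \<or> (w = snd (el!k) \<and> v = fst (el!k))"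
        by (auto simp: Rn_def)
      have v8: "v < 8" using Rn_bound[OF 2(3)] by simp
      have "\<exists>k<12. xs!k \<and> ((fst (el!k) = v \<and> X!(snd (el!k))) \<or> (snd (el!k) = v \<and> X!(fst (el!k))))"
        using k 2(2) by blast
      then show ?thesis using v8 by (simp add: step_def list_ex_upt)
    qed
  qed
  then show ?thesis by blast
qed

lemma iter_set: "length X = 8 \<Longrightarrow> {v. v < 8 \<and> ((step xs) ^^ n) X ! v} = (Fn xs ^^ n) {v. v < 8 \<and> X!v}"
proof (induction n)
  case 0 then show ?case by simp
next
  case (Suc n)
  have l: "length (((step xs) ^^ n) X) = 8" using Suc.prems by (cases n) simp_all
  show ?case using step_set[OF l] Suc by simp
qed

lemma iter_fix:
  fixes F :: "'a set \<Rightarrow> 'a set"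
  assumes infl: "\<And>A. A \<subseteq> F A" and bnd: "\<And>A. A \<subseteq> B \<Longrightarrow> F A \<subseteq> B" and fin: "finite B" and S0: "S0 \<subseteq> B"
  shows "F ((F ^^ card B) S0) = (F ^^ card B) S0"
proof (rule ccontr)
  assume ne: "F ((F ^^ card B) S0) \<noteq> (F ^^ card B) S0"
  have sub: "(F ^^ n) S0 \<subseteq> B" for n by (induction n) (use S0 bnd in auto)
  have stay: "(F ^^ m) S0 = (F ^^ n) S0" if "F ((F ^^ n) S0) = (F ^^ n) S0" "n \<le> m" for n m
    using that(2) by (induction m rule: dec_induct) (use that(1) in auto)
  have strict: "F ((F ^^ n) S0) \<noteq> (F ^^ n) S0" if "n \<le> card B" for n
  proof
    assume "F ((F ^^ n) S0) = (F ^^ n) S0"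
    then have "(F ^^ card B) S0 = (F ^^ n) S0" using stay that by blast
    with \<open>F ((F ^^ n) S0) = (F ^^ n) S0\<close> ne show False by simp
  qed
  have cardn: "n \<le> card ((F ^^ n) S0)" if "n \<le> Suc (card B)" for n
    using that
  proof (induction n)
    case 0 then show ?case by simp
  next
    case (Suc n)
    have "(F ^^ n) S0 \<subset> (F ^^ Suc n) S0" using infl strict[of n] Suc.prems by auto
    have fin2: "finite ((F ^^ Suc n) S0)" using sub[of "Suc n"] fin by (rule finite_subset)
    from \<open>(F ^^ n) S0 \<subset> (F ^^ Suc n) S0\<close> have "card ((F ^^ n) S0) < card ((F ^^ Suc n) S0)"
      by (rule psubset_card_mono[OF fin2])
    with Suc show ?case by simp
  qed
  have "Suc (card B) \<le> card ((F ^^ Suc (card B)) S0)" by (rule cardn) simp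
  moreover have "card ((F ^^ Suc (card B)) S0) \<le> card B" using sub fin by (intro card_mono)
  ultimately show False by simp
qed

lemma reach_closure: assumes u: "u < 8" shows "(Fn xs ^^ 8) {u} = (Rn xs)\<^sup>* `` {u}"
proof
  have "(Fn xs ^^ n) {u} \<subseteq> (Rn xs)\<^sup>* `` {u}" for n
  proof (induction n)
    case 0 then show ?case by auto
  next
    case (Suc n)
    show ?case using Suc unfolding Fn_def by (auto intro: rtrancl_into_rtrancl)
  qed
  then show "(Fn xs ^^ 8) {u} \<subseteq> (Rn xs)\<^sup>* `` {u}" .
  have infl: "A \<subseteq> Fn xs A" for A by (auto simp: Fn_def)
  have bnd: "Fn xs A \<subseteq> {..<8}" if "A \<subseteq> {..<8}" for A using that Rn_bound by (auto simp: Fn_def)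
  have fx8: "Fn xs ((Fn xs ^^ 8) {u}) = (Fn xs ^^ 8) {u}"
    using iter_fix[of "Fn xs" "{..<8}" "{u}", OF infl bnd] u by simp
  have uin: "u \<in> (Fn xs ^^ n) {u}" for n by (induction n) (auto simp: Fn_def)
  show "(Rn xs)\<^sup>* `` {u} \<subseteq> (Fn xs ^^ 8) {u}"
  proof
    fix v assume "v \<in> (Rn xs)\<^sup>* `` {u}"
    then have "(u, v) \<in> (Rn xs)\<^sup>*" by simp
    then show "v \<in> (Fn xs ^^ 8) {u}"
    proof (induction rule: rtrancl_induct)
      case base then show ?case using uin by blast
    next
      case (step y z)
      then have "z \<in> Fn xs ((Fn xs ^^ 8) {u})" unfolding Fn_def by blast
      then show ?case using fx8 by simp
    qed
  qed
qed

lemma firstv_lt: "firstv W < 8"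
  unfolding firstv_def by (auto split: option.split simp: find_Some_iff)

lemma firstv_in: assumes "\<exists>v<8. W!v" shows "W ! firstv W"
proof (cases "find (\<lambda>v. W!v) [0..<8]")
  case None then show ?thesis using assms by (auto simp: find_None_iff)
next
  case (Some a)
  then have "firstv W = a" by (simp add: firstv_def)
  with Some show ?thesis by (auto simp: find_Some_iff)
qed

lemma connc_iff: "connc xs \<longleftrightarrow> (\<forall>v\<in>Wset xs. (firstv (wv xs), v) \<in> (Rn xs)\<^sup>*)"
proof -
  let ?u = "firstv (wv xs)"
  have u: "?u < 8" by (rule firstv_lt)
  have X0: "{v. v < 8 \<and> map (\<lambda>v. v = ?u) [0..<8] ! v} = {?u}" using u by auto
  have r: "v < 8 \<Longrightarrow> reach xs ! v \<longleftrightarrow> v \<in> (Rn xs)\<^sup>* `` {?u}" for v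
  proof -
    assume v: "v < 8"
    have "{v. v < 8 \<and> reach xs ! v} = (Fn xs ^^ 8) {?u}"
      unfolding reach_def using iter_set[where X = "map (\<lambda>v. v = ?u) [0..<8]" and xs = xs and n = 8] X0 by simp
    then show ?thesis using v reach_closure[OF u, of xs] by blast
  qed
  show ?thesis unfolding connc_def list_all_upt Wset_def using r by auto
qed

lemma conn_good: assumes ne: "list_ex id xs" and l: "length xs = 12"
  shows "edge_graph_connected (enc xs) \<longleftrightarrow> connc xs"
proof -
  obtain k where k: "k < 12" "xs!k" using ne l by (auto simp: list_ex_length)
  have "fst (el!k) \<in> Wset xs" using k el_bounds[OF k(1)] by (auto simp: Wset_def wv_nth)
  then have "\<exists>v<8. wv xs ! v" by (auto simp: Wset_def)
  then have u: "firstv (wv xs) \<in> Wset xs" using firstv_in firstv_lt by (auto simp: Wset_def)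
  have sy: "sym ((Rn xs)\<^sup>*)" by (rule sym_rtrancl[OF Rn_sym])
  have "(\<forall>a\<in>Wset xs. \<forall>b\<in>Wset xs. (a, b) \<in> (Rn xs)\<^sup>*) \<longleftrightarrow> (\<forall>v\<in>Wset xs. (firstv (wv xs), v) \<in> (Rn xs)\<^sup>*)"
  proof
    assume "\<forall>a\<in>Wset xs. \<forall>b\<in>Wset xs. (a, b) \<in> (Rn xs)\<^sup>*"
    then show "\<forall>v\<in>Wset xs. (firstv (wv xs), v) \<in> (Rn xs)\<^sup>*" using u by blast
  next
    assume h: "\<forall>v\<in>Wset xs. (firstv (wv xs), v) \<in> (Rn xs)\<^sup>*"
    show "\<forall>a\<in>Wset xs. \<forall>b\<in>Wset xs. (a, b) \<in> (Rn xs)\<^sup>*"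
    proof (intro ballI)
      fix a b assume "a \<in> Wset xs" "b \<in> Wset xs"
      then have "(firstv (wv xs), a) \<in> (Rn xs)\<^sup>*" "(firstv (wv xs), b) \<in> (Rn xs)\<^sup>*" using h by auto
      then have "(a, firstv (wv xs)) \<in> (Rn xs)\<^sup>*" using sy by (auto dest: symD)
      then show "(a, b) \<in> (Rn xs)\<^sup>*" using \<open>(firstv (wv xs), b) \<in> (Rn xs)\<^sup>*\<close> by (rule rtrancl_trans)
    qed
  qed
  then show ?thesis unfolding conn_enc connc_iff .
qed

lemma iv_edge_act: "incident_vertices (edge_act f S) = f ` incident_vertices S"
  unfolding incident_vertices_def edge_act_def by auto

lemma ioc_rot: assumes fG: "f \<in> rot_group" and S: "incomplete_open_cube S"
  shows "incomplete_open_cube (edge_act f S)"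
proof -
  obtain A :: "real^3^3" and b where orth: "orthogonal_matrix A"
    and fx: "\<And>x. f x = A *v x + b"
    using fG unfolding rot_group_def by blast
  have inj: "inj f"
  proof (rule injI)
    fix x y assume "f x = f y"
    then have "A *v x = A *v y" using fx by simp
    then have "transpose A *v (A *v x) = transpose A *v (A *v y)" by simp
    then show "x = y" using orth unfolding orthogonal_matrix_def
      by (simp add: matrix_vector_mul_assoc)
  qed
  obtain p where p: "p < 24" "realizes f p" using rot_realize[OF fG] by blast
  have sub: "edge_act f T \<subseteq> cube_E" if hT: "T \<subseteq> cube_E" for T
  proof
    fix e assume "e \<in> edge_act f T"
    then obtain e0 where e0: "e0 \<in> T" "e = f ` e0" by (auto simp: edge_act_def)
    have "e0 \<in> edg ` {..<12}" using e0(1) hT cube_E_edg by blast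
    then obtain k where k: "k < 12" "e0 = edg k" by blast
    have "e = edg (gl!p!k)" using e0 k edge_img[OF p(2) p(1) k(1)] by simp
    then show "e \<in> cube_E" using E2[OF p(1) k(1)] cube_E_edg by auto
  qed
  have SE: "S \<subseteq> cube_E" "S \<noteq> {}" "S \<noteq> cube_E" "edge_graph_connected S" "non_planar S"
    using S by (auto simp: incomplete_open_cube_def)
  have injE: "inj (edge_act f)"
  proof -
    have i1: "inj (image f)" by (meson inj injI inj_image_eq_iff)
    have i2: "inj (image (image f))" by (meson i1 injI inj_image_eq_iff)
    have "edge_act f = image (image f)" by (rule ext) (simp add: edge_act_def)
    then show ?thesis using i2 by simp
  qed
  have finE: "finite cube_E" unfolding cube_E_edg by simp
  have ecE: "edge_act f cube_E = cube_E"
  proof (rule card_subset_eq[OF finE sub[OF order_refl]])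
    show "card (edge_act f cube_E) = card cube_E"
      unfolding edge_act_def using inj
      by (intro card_image) (meson inj injI inj_image_eq_iff inj_on_subset subset_UNIV)
  qed
  have ne: "edge_act f S \<noteq> {}" using SE(2) by (simp add: edge_act_def)
  have nf: "edge_act f S \<noteq> cube_E"
  proof
    assume "edge_act f S = cube_E"
    then have "edge_act f S = edge_act f cube_E" using ecE by simp
    then have "S = cube_E" using injE by (simp add: inj_eq)
    with SE(3) show False by simp
  qed
  have conn: "edge_graph_connected (edge_act f S)"
    unfolding edge_graph_connected_def iv_edge_act
  proof (intro ballI)
    fix u' v' assume "u' \<in> f ` incident_vertices S" "v' \<in> f ` incident_vertices S"
    then obtain u v where uv: "u \<in> incident_vertices S" "v \<in> incident_vertices S" "u' = f u" "v' = f v" by auto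
    have "(u, v) \<in> {(x, y). {x, y} \<in> S}\<^sup>*" using SE(4) uv unfolding edge_graph_connected_def by blast
    then have "(f u, f v) \<in> {(x, y). {x, y} \<in> edge_act f S}\<^sup>*"
    proof (induction rule: rtrancl_induct)
      case base then show ?case by simp
    next
      case (step y z)
      have "{f y, f z} \<in> edge_act f S" using step(2) unfolding edge_act_def by (auto intro: image_eqI[of _ _ "{y,z}"])
      then show ?case using step(3) by (meson CollectI case_prodI rtrancl.rtrancl_into_rtrancl)
    qed
    then show "(u', v') \<in> {(x, y). {x, y} \<in> edge_act f S}\<^sup>*" using uv by simp
  qed
  have np: "non_planar (edge_act f S)"
    unfolding non_planar_def iv_edge_act
  proof
    assume "\<exists>a c. a \<noteq> 0 \<and> f ` incident_vertices S \<subseteq> {x. a \<bullet> x = c}"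
    then obtain a c where a: "a \<noteq> 0" "f ` incident_vertices S \<subseteq> {x. a \<bullet> x = c}" by blast
    have a': "a v* A \<noteq> 0"
    proof
      assume "a v* A = 0"
      have "a = (a v* A) v* transpose A" using orth unfolding orthogonal_matrix_def
        by (metis vector_matrix_mul_assoc vector_matrix_mul_rid)
      also have "\<dots> = 0" unfolding \<open>a v* A = 0\<close> by (simp add: vector_matrix_mult_def vec_eq_iff)
      finally have "a = 0" .
      with a(1) show False by simp
    qed
    have "incident_vertices S \<subseteq> {x. (a v* A) \<bullet> x = c - a \<bullet> b}"
    proof
      fix x assume "x \<in> incident_vertices S"
      then have "a \<bullet> f x = c" using a(2) by auto
      then show "x \<in> {x. (a v* A) \<bullet> x = c - a \<bullet> b}" unfolding fx by (simp add: dot_lmul_matrix inner_add_right)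
    qed
    then show False using a' SE(5) unfolding non_planar_def by blast
  qed
  show ?thesis unfolding incomplete_open_cube_def using sub[OF SE(1)] ne nf conn np by blast
qed

lemma ioc_rot_iff: assumes fG: "f \<in> rot_group"
  shows "incomplete_open_cube (edge_act f S) \<longleftrightarrow> incomplete_open_cube S"
proof
  show "incomplete_open_cube S \<Longrightarrow> incomplete_open_cube (edge_act f S)" using ioc_rot[OF fG] .
  obtain h where h: "h \<in> rot_group" "\<forall>x. h (f x) = x" using rot_inv[OF fG] by blast
  have hg: "edge_act h (edge_act f S) = S"
    unfolding edge_act_def by (simp add: image_image h(2))
  assume "incomplete_open_cube (edge_act f S)"
  from ioc_rot[OF h(1) this] show "incomplete_open_cube S" unfolding hg .
qed

lemma three_pts:
  fixes P :: "(real^3) set"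
  assumes fin: "finite P" and c3: "card P \<le> 3"
  shows "\<exists>a c. a \<noteq> 0 \<and> P \<subseteq> {x. a \<bullet> x = c}"
proof (cases "P = {}")
  case True
  have "(vector[1,0,0] :: real^3) \<noteq> 0" by (simp add: vec3_eq)
  then show ?thesis using True by blast
next
  case False
  then obtain p where p: "p \<in> P" by blast
  let ?D = "(\<lambda>x. x - p) ` (P - {p})"
  have fD: "finite ?D" using fin by simp
  have "card ?D \<le> card (P - {p})" using fin by (intro card_image_le) simp
  also have "\<dots> = card P - 1" using p fin by simp
  finally have cD: "card ?D \<le> 2" using c3 by simp
  have "dim ?D \<le> card ?D" using fD by (rule real_vector.dim_le_card')
  then have dD: "dim ?D < DIM(real^3)" using cD by simp
  obtain a :: "real^3" where a: "a \<noteq> 0" "\<And>y. y \<in> span ?D \<Longrightarrow> orthogonal a y"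
    using orthogonal_to_subspace_exists[OF dD] by blast
  have "P \<subseteq> {x. a \<bullet> x = a \<bullet> p}"
  proof
    fix x assume x: "x \<in> P"
    show "x \<in> {x. a \<bullet> x = a \<bullet> p}"
    proof (cases "x = p")
      case True then show ?thesis by simp
    next
      case False
      then have "x - p \<in> span ?D" using x by (intro span_base) auto
      then have "a \<bullet> (x - p) = 0" using a(2) by (simp add: orthogonal_def)
      then show ?thesis by (simp add: inner_diff_right)
    qed
  qed
  then show ?thesis using a(1) by blast
qed

lemma np_enc: "non_planar (enc xs) \<longleftrightarrow> noncoc (wv xs)"
proof
  assume np: "non_planar (enc xs)"
  show "noncoc (wv xs)"
  proof (rule ccontr)
    assume nn: "\<not> noncoc (wv xs)"
    have "chk (wv xs)" using allb8 allb_iff[of 8 "[]"] by simp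
    then have "rectc (wv xs) \<or> length (filter id (wv xs)) \<le> 3" using nn by (simp add: chk_def)
    then have "\<exists>a c. a \<noteq> 0 \<and> (!) vl ` Wset xs \<subseteq> {x. a \<bullet> x = c}"
    proof
      assume "rectc (wv xs)"
      then obtain R a c where R: "(R, a, c) \<in> set rp" "\<forall>i<8. wv xs ! i \<longrightarrow> i \<in> set R"
        unfolding rectc_def list_ex_iff list_all_upt by auto
      have "a \<noteq> 0 \<and> (\<forall>i\<in>set R. a \<bullet> (vl!i) = c)" using rp_ok R(1) unfolding list_all_iff by fastforce
      moreover have "Wset xs \<subseteq> set R" using R(2) by (auto simp: Wset_def)
      ultimately show ?thesis by blast
    next
      assume "length (filter id (wv xs)) \<le> 3"
      then have "card (Wset xs) \<le> 3" unfolding length_filter_conv_card Wset_def by simp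
      then have "card ((!) vl ` Wset xs) \<le> 3" using card_image_le[of "Wset xs" "(!) vl"]
        by (simp add: Wset_def)
      moreover have "finite ((!) vl ` Wset xs)" by (simp add: Wset_def)
      ultimately show ?thesis using three_pts by blast
    qed
    then show False using np unfolding non_planar_def iv_enc by blast
  qed
next
  assume "noncoc (wv xs)"
  then obtain Q where Q: "Q \<in> set nonco" "\<forall>i\<in>set Q. wv xs ! i"
    unfolding noncoc_def list_ex_iff list_all_iff by blast
  have Q8: "\<forall>i\<in>set Q. i < 8" using nonco_ok Q(1) unfolding list_all_iff by blast
  show "non_planar (enc xs)"
    unfolding non_planar_def iv_enc
  proof
    assume "\<exists>a c. a \<noteq> 0 \<and> (!) vl ` Wset xs \<subseteq> {x. a \<bullet> x = c}"
    then obtain a c where a: "a \<noteq> 0" "(!) vl ` Wset xs \<subseteq> {x. a \<bullet> x = c}" by blast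
    have "\<forall>i\<in>set Q. a \<bullet> (vl!i) = c" using a(2) Q(2) Q8 by (auto simp: Wset_def)
    then have "a = 0" using nonco_lin[OF Q(1)] by blast
    with a(1) show False by simp
  qed
qed

lemma enc_sub: "enc xs \<subseteq> cube_E" unfolding enc_def cube_E_edg by auto

lemma enc_ne: "length xs = 12 \<Longrightarrow> enc xs \<noteq> {} \<longleftrightarrow> list_ex id xs"
  unfolding enc_def list_ex_length by auto

lemma enc_nf: assumes l: "length xs = 12" shows "enc xs \<noteq> cube_E \<longleftrightarrow> \<not> list_all id xs"
proof -
  have ie: "inj_on edg {..<12}" by (auto intro: inj_onI simp: edg_inj)
  have "enc xs = cube_E \<longleftrightarrow> {k. k < 12 \<and> xs!k} = {..<12}"
    unfolding enc_def cube_E_edg using inj_on_image_eq_iff[OF ie, of "{k. k < 12 \<and> xs!k}" "{..<12}"] by auto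
  also have "\<dots> \<longleftrightarrow> list_all id xs" using l unfolding list_all_length by auto
  finally show ?thesis by simp
qed

lemma good0_iff: assumes l: "length xs = 12"
  shows "incomplete_open_cube (enc xs) \<longleftrightarrow> good0 xs"
proof (cases "list_ex id xs")
  case True
  then show ?thesis
    unfolding incomplete_open_cube_def good0_def using enc_sub enc_ne[OF l] enc_nf[OF l] conn_good[OF True l] np_enc
    by auto
next
  case False
  then show ?thesis unfolding incomplete_open_cube_def good0_def using enc_ne[OF l] by auto
qed

lemma good0_orbL: assumes l: "length xs = 12" and g: "good0 xs"
  shows "orbL xs \<subseteq> {xs. length xs = 12 \<and> good0 xs}"
proof
  fix ys assume y: "ys \<in> orbL xs"
  then obtain p where p: "p < 24" "ys = act p xs" by (auto simp: orbL_def)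
  have "enc ys = edge_act (\<lambda>x. Ml!p *v x) (enc xs)"
    using p edge_act_enc[OF realize_rot(2)[OF p(1)] p(1)] by simp
  then have "incomplete_open_cube (enc ys)"
    using ioc_rot_iff[OF realize_rot(1)[OF p(1)]] good0_iff[OF l] g by simp
  then show "ys \<in> {xs. length xs = 12 \<and> good0 xs}" using good0_iff p by simp
qed

lemma finite_len: "finite {xs :: bool list. length xs = n}"
proof -
  have "{xs :: bool list. length xs = n} = {xs. set xs \<subseteq> UNIV \<and> length xs = n}" by simp
  then show ?thesis using finite_lists_length_eq[of "UNIV :: bool set" n] by simp
qed

lemma card_len_split:
  "card {xs :: bool list. length xs = Suc n \<and> P (pre @ xs)} =
   card {xs. length xs = n \<and> P ((pre @ [False]) @ xs)} + card {xs. length xs = n \<and> P ((pre @ [True]) @ xs)}"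
proof -
  let ?A = "{xs. length xs = n \<and> P ((pre @ [False]) @ xs)}"
  let ?B = "{xs. length xs = n \<and> P ((pre @ [True]) @ xs)}"
  have eq: "{xs :: bool list. length xs = Suc n \<and> P (pre @ xs)} = Cons False ` ?A \<union> Cons True ` ?B"
  proof
    show "{xs :: bool list. length xs = Suc n \<and> P (pre @ xs)} \<subseteq> Cons False ` ?A \<union> Cons True ` ?B"
    proof
      fix xs :: "bool list" assume "xs \<in> {xs. length xs = Suc n \<and> P (pre @ xs)}"
      then obtain b ys where xs: "xs = b # ys" "length ys = n" "P (pre @ b # ys)"
        by (auto simp: length_Suc_conv)
      then show "xs \<in> Cons False ` ?A \<union> Cons True ` ?B" by (cases b) auto
    qed
    show "Cons False ` ?A \<union> Cons True ` ?B \<subseteq> {xs :: bool list. length xs = Suc n \<and> P (pre @ xs)}"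
      by auto
  qed
  have fA: "finite ?A" by (rule finite_subset[OF _ finite_len[of n]]) auto
  have fB: "finite ?B" by (rule finite_subset[OF _ finite_len[of n]]) auto
  have "card (Cons False ` ?A \<union> Cons True ` ?B) = card (Cons False ` ?A) + card (Cons True ` ?B)"
    by (rule card_Un_disjoint) (use fA fB in auto)
  also have "\<dots> = card ?A + card ?B" by (simp add: card_image)
  finally show ?thesis using eq by simp
qed

lemma cntg_card: "cntg n pre = card {xs. length xs = n \<and> minl (pre @ xs) \<and> good0 (pre @ xs)}"
proof (induction n arbitrary: pre)
  case 0
  have "{xs :: bool list. length xs = 0 \<and> minl (pre @ xs) \<and> good0 (pre @ xs)} = (if minl pre \<and> good0 pre then {[]} else {})"
    by auto
  then show ?case by simp
next
  case (Suc n)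
  show ?case unfolding cntg.simps Suc.IH
    using card_len_split[of n "\<lambda>xs. minl xs \<and> good0 xs" pre] by simp
qed

lemma orbit_count:
  fixes orb :: "'a \<Rightarrow> 'a set" and r :: "'a \<Rightarrow> nat"
  assumes fin: "finite X" and self: "\<And>x. x \<in> X \<Longrightarrow> x \<in> orb x"
    and inv: "\<And>x y. x \<in> X \<Longrightarrow> y \<in> orb x \<Longrightarrow> orb y = orb x"
    and inj: "inj_on r X"
  shows "card (orb ` X) = card {x \<in> X. \<forall>y \<in> orb x \<inter> X. r x \<le> r y}"
proof -
  let ?C = "{x \<in> X. \<forall>y \<in> orb x \<inter> X. r x \<le> r y}"
  have "orb ` X \<subseteq> orb ` ?C"
  proof
    fix Ob assume "Ob \<in> orb ` X"
    then obtain x where x: "x \<in> X" "Ob = orb x" by auto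
    let ?M = "orb x \<inter> X"
    have fM: "finite ?M" using fin by simp
    have nM: "?M \<noteq> {}" using self[OF x(1)] x(1) by auto
    define k where "k = Min (r ` ?M)"
    have "k \<in> r ` ?M" unfolding k_def using fM nM by (intro Min_in) auto
    then obtain m where m: "m \<in> ?M" "r m = k" by auto
    have mk: "\<forall>y \<in> ?M. r m \<le> r y" using m fM unfolding k_def by auto
    have om: "orb m = orb x" using inv[OF x(1)] m(1) by auto
    have mC: "m \<in> ?C" using m(1) mk om by auto
    have "Ob = orb m" using x(2) om by simp
    then show "Ob \<in> orb ` ?C" using mC by (rule image_eqI)
  qed
  then have eq: "orb ` ?C = orb ` X" by auto
  have "inj_on orb ?C"
  proof (rule inj_onI)
    fix x x' assume x: "x \<in> ?C" and x': "x' \<in> ?C" and e: "orb x = orb x'"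
    have "x' \<in> orb x \<inter> X" using self[of x'] x' e by auto
    then have "r x \<le> r x'" using x by auto
    moreover have "x \<in> orb x' \<inter> X" using self[of x] x e by auto
    then have "r x' \<le> r x" using x' by auto
    ultimately have "r x = r x'" by simp
    then show "x = x'" using inj x x' by (auto dest: inj_onD)
  qed
  then have "card (orb ` ?C) = card ?C" by (rule card_image)
  with eq show ?thesis by simp
qed

lemma mins_iff: "mins Ys T \<longleftrightarrow> (\<forall>Y \<in> set Ys. leqb T Y)"
  by (induction Ys) auto

lemma act_actq: "act p xs = actq (ginv!p) xs"
  by (simp add: act_def actq_def)

lemma orbL_actq: "orbL xs = set (map (\<lambda>q. actq q xs) ginv)"
proof -
  have "set ginv = (!) ginv ` {..<24}" by (auto simp: set_conv_nth len_ginv)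
  then show ?thesis unfolding orbL_def act_actq by (simp add: image_image)
qed

lemma minl_iff: assumes l: "length xs = 12" and inv: "orbL xs \<subseteq> {xs. length xs = 12 \<and> good0 xs}"
  shows "minl xs \<longleftrightarrow> (\<forall>y \<in> orbL xs \<inter> {xs. length xs = 12 \<and> good0 xs}. rk xs \<le> rk y)"
proof -
  have "minl xs \<longleftrightarrow> (\<forall>Y \<in> orbL xs. leqb xs Y)"
    unfolding minl_def mins_iff orbL_actq ..
  also have "\<dots> \<longleftrightarrow> (\<forall>Y \<in> orbL xs. rk xs \<le> rk Y)"
  proof -
    have h: "leqb xs Y \<longleftrightarrow> rk xs \<le> rk Y" if "Y \<in> orbL xs" for Y
    proof -
      have "length Y = 12" using that orbL_L12[of xs] by auto
      then show ?thesis using leqb_rk[of xs Y] l by simp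
    qed
    then show ?thesis by blast
  qed
  also have "\<dots> \<longleftrightarrow> (\<forall>y \<in> orbL xs \<inter> {xs. length xs = 12 \<and> good0 xs}. rk xs \<le> rk y)"
    using inv by auto
  finally show ?thesis .
qed

lemma orbit_count_L:
  "card (orbL ` {xs. length xs = 12 \<and> good0 xs}) = cntg 12 []"
proof -
  let ?X = "{xs. length xs = 12 \<and> good0 xs}"
  have fin: "finite ?X" by (rule finite_subset[OF _ finite_len[of 12]]) auto
  have "card (orbL ` ?X) = card {x \<in> ?X. \<forall>y \<in> orbL x \<inter> ?X. rk x \<le> rk y}"
  proof (rule orbit_count[OF fin])
    show "\<And>x. x \<in> ?X \<Longrightarrow> x \<in> orbL x" using orbL_self by auto
    show "\<And>x y. x \<in> ?X \<Longrightarrow> y \<in> orbL x \<Longrightarrow> orbL y = orbL x" using orbL_act by auto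
    show "inj_on rk ?X" by (rule inj_onI) (auto intro: rk_inj)
  qed
  also have "{x \<in> ?X. \<forall>y \<in> orbL x \<inter> ?X. rk x \<le> rk y} = {xs. length xs = 12 \<and> minl xs \<and> good0 xs}"
    using minl_iff good0_orbL by auto
  also have "card \<dots> = cntg 12 []" by (simp add: cntg_card)
  finally show ?thesis .
qed

lemma count_122: "cntg 12 [] = 122"
  by (simp add: minl_sym good0_def connc_def wv_sym step_sym nonco_sym reach_def firstv_def numeral_eq_Suc upt_rec)

theorem mainTheorem2:
  shows "card {rot_orbit S | S. incomplete_open_cube S} = 122"
proof -
  let ?X = "{xs. length xs = 12 \<and> good0 xs}"
  have eq: "{rot_orbit S | S. incomplete_open_cube S} = image enc ` (orbL ` ?X)"
  proof
    show "{rot_orbit S | S. incomplete_open_cube S} \<subseteq> image enc ` (orbL ` ?X)"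
    proof
      fix O' assume "O' \<in> {rot_orbit S | S. incomplete_open_cube S}"
      then obtain S where S: "O' = rot_orbit S" "incomplete_open_cube S" by blast
      define xs where "xs = map (\<lambda>k. edg k \<in> S) [0..<12]"
      have l: "length xs = 12" by (simp add: xs_def)
      have "S \<subseteq> edg ` {..<12}" using S(2) cube_E_edg by (simp add: incomplete_open_cube_def)
      then have e: "enc xs = S" unfolding enc_def xs_def by auto
      have g: "good0 xs" using good0_iff[OF l] S(2) e by simp
      have "O' = enc ` orbL xs" using S(1) e rot_orbit_enc by metis
      then show "O' \<in> image enc ` (orbL ` ?X)" using l g by blast
    qed
    show "image enc ` (orbL ` ?X) \<subseteq> {rot_orbit S | S. incomplete_open_cube S}"
    proof
      fix O' assume "O' \<in> image enc ` (orbL ` ?X)"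
      then obtain xs where xs: "length xs = 12" "good0 xs" "O' = enc ` orbL xs" by blast
      have "incomplete_open_cube (enc xs)" using good0_iff[OF xs(1)] xs(2) by simp
      moreover have "O' = rot_orbit (enc xs)" using xs(3) rot_orbit_enc by metis
      ultimately show "O' \<in> {rot_orbit S | S. incomplete_open_cube S}" by blast
    qed
  qed
  have inj: "inj_on (image enc) (orbL ` ?X)"
  proof (rule inj_onI)
    fix A B assume A: "A \<in> orbL ` ?X" and B: "B \<in> orbL ` ?X" and e: "enc ` A = enc ` B"
    have "A \<subseteq> {xs. length xs = 12}" "B \<subseteq> {xs. length xs = 12}" using A B orbL_L12 by auto
    then show "A = B" using inj_on_image_eq_iff[OF enc_inj] e by blast
  qed
  have "card {rot_orbit S | S. incomplete_open_cube S} = card (orbL ` ?X)"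
    unfolding eq using inj by (rule card_image)
  also have "\<dots> = cntg 12 []" by (rule orbit_count_L)
  also have "\<dots> = 122" by (rule count_122)
  finally show ?thesis .
qed

end
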